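(* Let $n\geq 3$. In the hypercube $Q_n$, the following sets of edges $M[X,Y]$ are perfect matchings between the vertex sets $X$ and $Y$: (i) $M^0[C_{h,i},C_{h,i+1}]$ for every $0\le i<h\le n$; (ii) $M^1[C^-_{1,0},C^-_{1,1}]$, $M^1[C^+_{h,i},C^-_{h+2,i+2}]$, and $M^1[C^+_{h,i},C^-_{h+2,i}]$ for every $0\le i\le h\le n-2$; (iii) $Z^{02}[C^-_{h,i-1},C^-_{h,i}]$ for every $1<i<h\le n$, where $Z^{02}:=\{\{x,z(x)\}\mid x\in C^-_{h,i}\}$.
   Context: $Q_n$ is the hypercube on $\{0,1\}^n$ (adjacent iff differing in one position); level $k$ is $L_{n,k}$, the set of strings with exactly $k$ ones. $D$ denotes the set of all bitstrings (including the empty string $\varepsilon$) with equally many $0$s and $1$s in which every prefix has at least as many $0$s as $1$s. Every nonempty $x\in D$ can be written uniquely as $x=0\,u\,1\,v$ with $u,v\in D$; then $\mathrm{rot}(x):=u\,0\,v\,1$; set $\mathrm{rot}(\varepsilon):=\varepsilon$. Every $x\in\{0,1\}^n$ can be written uniquely as $x=u_0\,1\,u_1\,1\cdots u_{i-1}\,1\,u_i\,0\,u_{i+1}\,0\cdots 0\,u_h$ with $u_0,\ldots,u_h\in D$ (that is, $i$ separating $1$s followed by $h-i$ separating $0$s); $C_{h,i}$ is the set of all $x$ with such a representation for given $h$ and $i$, $C^-_{h,i}\subseteq C_{h,i}$ those with $u_i=\varepsilon$ and $C^+_{h,i}$ those with $u_i\ne\varepsilon$. For $x\in C^-_{h,i}$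 with $1<i<h$, write $x=u_0\,1\cdots u_{i-2}\,1\,u_{i-1}\,1\,0\,u_{i+1}\,0\cdots0\,u_h$ and define $z(x):=u_0\,1\cdots u_{i-2}\,1\,0\,\mathrm{rot}(u_{i-1})\,0\,u_{i+1}\,0\cdots 0\,u_h$. Lexical matchings: interpret a bitstring as a lattice path from $(0,0)$, each $0$ a step $(+1,-1)$ and each $1$ a step $(+1,+1)$. For $x\in L_{n,k}$ let $x^{\searrow}$ be obtained by appending $0$-steps until the path ends at height $-1$ (if $x$ ends at height less than $-1$, $x^\searrow:=x$). Scan the down-steps of $x^\searrow$ row by row from top to bottom, and from right to left within each row, numbering them $0,1,2,\ldots$. If the $p$-th down-step found lies within the part $x$ (not in the appended part), let $M^{p,\uparrow}_{n,k}(x)\in L_{n,k+1}$ be obtained from $x$ by flipping that step (bit) to $1$; otherwise $x$ is unmatched. The $p$-lexical matching $M^p$ is the set of all edges $\{x,M^{p,\uparrow}_{n,k}(x)\}$ over all $0\le k<n$ and all matched $x\in L_{n,k}$ (this is a matching). For a set $M$ of edges and disjoint vertex sets $X,Y$, $M[X,Y]$ denotes the set of edges of $M$ with one end in $X$ and the other in $Y$. *)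

theory Defs
  imports Main
begin

text \<open>Bitstrings are boolean lists: True = bit 1 (up-step), False = bit 0 (down-step).
  The vertex set of Q_n is the set of lists of length n.\<close>

definition height :: "bool list \<Rightarrow> int" where
  "height w = (\<Sum>b\<leftarrow>w. if b then 1 else -1)"

definition Dyck :: "bool list set" where
  "Dyck = {w. height w = 0 \<and> (\<forall>k\<le>length w. height (take k w) \<le> 0)}"

definition rot :: "bool list \<Rightarrow> bool list" where
  "rot x = (if x = [] then [] else
     (THE w. \<exists>u v. u \<in> Dyck \<and> v \<in> Dyck \<and> x = False # u @ True # v \<and>
                   w = u @ False # v @ [True]))"

text \<open>join i [u_0,...,u_h] = u_0 s_1 u_1 s_2 ... s_h u_h with s_j = 1 iff j \<le> i.\<close>
definition join :: "nat \<Rightarrow> bool list list \<Rightarrow> bool list" where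
  "join i us = concat (map (\<lambda>j. (if j = 0 then [] else [j \<le> i]) @ us ! j) [0..<length us])"

definition C :: "nat \<Rightarrow> nat \<Rightarrow> nat \<Rightarrow> bool list set" where
  "C n h i = {x. length x = n \<and> i \<le> h \<and>
      (\<exists>us. length us = Suc h \<and> set us \<subseteq> Dyck \<and> x = join i us)}"

definition Cminus :: "nat \<Rightarrow> nat \<Rightarrow> nat \<Rightarrow> bool list set" where
  "Cminus n h i = {x. length x = n \<and> i \<le> h \<and>
      (\<exists>us. length us = Suc h \<and> set us \<subseteq> Dyck \<and> x = join i us \<and> us ! i = [])}"

definition Cplus :: "nat \<Rightarrow> nat \<Rightarrow> nat \<Rightarrow> bool list set" where
  "Cplus n h i = {x. length x = n \<and> i \<le> h \<and>
      (\<exists>us. length us = Suc h \<and> set us \<subseteq> Dyck \<and> x = join i us \<and> us ! i \<noteq> [])}"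

definition zmap :: "nat \<Rightarrow> nat \<Rightarrow> bool list \<Rightarrow> bool list" where
  "zmap h i x = (THE y. \<exists>us. length us = Suc h \<and> set us \<subseteq> Dyck \<and> x = join i us \<and> us ! i = [] \<and>
      y = join (i - 1) (us[i - 1 := [], i := rot (us ! (i - 1))]))"

definition Z02 :: "nat \<Rightarrow> nat \<Rightarrow> nat \<Rightarrow> bool list set set" where
  "Z02 n h i = {{x, zmap h i x} | x. x \<in> Cminus n h i}"

definition dpath :: "bool list \<Rightarrow> bool list" where
  "dpath x = (if height x \<ge> -1 then x @ replicate (nat (height x + 1)) False else x)"

definition downs :: "bool list \<Rightarrow> nat set" where
  "downs w = {j. j < length w \<and> \<not> w ! j}"

text \<open>scan_before w j' j: down-step j' is scanned before down-step j
  (higher row first; within a row, right to left).\<close>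
definition scan_before :: "bool list \<Rightarrow> nat \<Rightarrow> nat \<Rightarrow> bool" where
  "scan_before w j' j \<longleftrightarrow> height (take j' w) > height (take j w) \<or>
     (height (take j' w) = height (take j w) \<and> j' > j)"

definition Mlex :: "nat \<Rightarrow> nat \<Rightarrow> bool list set set" where
  "Mlex n p = {{x, x[j := True]} | x j. length x = n \<and> j < length x \<and> j \<in> downs (dpath x) \<and>
      card {j' \<in> downs (dpath x). scan_before (dpath x) j' j} = p}"

definition hyp_adj :: "bool list \<Rightarrow> bool list \<Rightarrow> bool" where
  "hyp_adj x y \<longleftrightarrow> length x = length y \<and> card {j. j < length x \<and> x ! j \<noteq> y ! j} = 1"

definition edges_between :: "bool list set set \<Rightarrow> bool list set \<Rightarrow> bool list set \<Rightarrow> bool list set set" where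
  "edges_between M X Y = {e \<in> M. \<exists>x\<in>X. \<exists>y\<in>Y. e = {x, y}}"

definition perfect_matching_between :: "bool list set set \<Rightarrow> bool list set \<Rightarrow> bool list set \<Rightarrow> bool" where
  "perfect_matching_between M X Y \<longleftrightarrow> X \<inter> Y = {} \<and>
     (\<forall>e\<in>M. \<exists>x\<in>X. \<exists>y\<in>Y. e = {x, y} \<and> hyp_adj x y) \<and>
     (\<forall>v\<in>X \<union> Y. \<exists>!e. e \<in> M \<and> v \<in> e)"

end

theory Submission
  imports Defs
begin


definition ph :: "bool list \<Rightarrow> nat \<Rightarrow> int" where
  "ph x k = height (take k x)"

definition stp :: "bool \<Rightarrow> int" where "stp b = (if b then 1 else -1)"

lemma height_Nil[simp]: "height [] = 0" by (simp add: height_def)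
lemma height_Cons[simp]: "height (b # w) = stp b + height w" by (simp add: height_def stp_def)
lemma height_append[simp]: "height (a @ w) = height a + height w" by (simp add: height_def)

lemma ph_0[simp]: "ph x 0 = 0" by (simp add: ph_def)

lemma ph_Suc: "k < length x \<Longrightarrow> ph x (Suc k) = ph x k + stp (x ! k)"
  by (simp add: ph_def take_Suc_conv_app_nth)

lemma ph_ge: "length x \<le> k \<Longrightarrow> ph x k = height x"
  by (simp add: ph_def)

lemma ph_len[simp]: "ph x (length x) = height x"
  by (simp add: ph_def)

lemma ph_append: "ph (a @ b) k = (if k \<le> length a then ph a k else height a + ph b (k - length a))"
  by (simp add: ph_def)

lemma ph_Cons: "ph (s # r) k = (if k = 0 then 0 else stp s + ph r (k - 1))"
  by (cases k) (simp_all add: ph_def)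

lemma stp_cases: "stp b = 1 \<or> stp b = -1" by (simp add: stp_def)

lemma ph_step: "\<bar>ph x (Suc k) - ph x k\<bar> \<le> 1"
proof (cases "k < length x")
  case True thus ?thesis by (simp add: ph_Suc stp_def)
next
  case False thus ?thesis by (simp add: ph_ge)
qed

lemma height_upd: "j < length y \<Longrightarrow> height (y[j := b]) = height y + stp b - stp (y ! j)"
proof (induction y arbitrary: j)
  case Nil thus ?case by simp
next
  case (Cons a y) thus ?case by (cases j) auto
qed

lemma ph_upd: assumes "j < length x" shows "ph (x[j := b]) k = ph x k + (if j < k then stp b - stp (x ! j) else 0)"
proof (cases "j < k")
  case True thus ?thesis using assms by (simp add: ph_def take_update_swap height_upd)
next
  case False thus ?thesis by (simp add: ph_def)
qed

lemma Dyck_iff: "w \<in> Dyck \<longleftrightarrow> height w = 0 \<and> (\<forall>k. ph w k \<le> 0)"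
proof -
  have "(\<forall>k\<le>length w. height (take k w) \<le> 0) \<longleftrightarrow> (\<forall>k. ph w k \<le> 0)"
  proof
    assume a: "\<forall>k\<le>length w. height (take k w) \<le> 0"
    show "\<forall>k. ph w k \<le> 0"
    proof
      fix k show "ph w k \<le> 0"
        using a[rule_format, of "min k (length w)"] by (cases "k \<le> length w") (simp_all add: ph_def min_def)
    qed
  qed (simp add: ph_def)
  thus ?thesis by (simp add: Dyck_def)
qed

lemma Dyck_Nil[simp]: "[] \<in> Dyck" by (simp add: Dyck_iff ph_def)

lemma ivt: "ph x k \<ge> c \<Longrightarrow> c \<ge> 0 \<Longrightarrow> \<exists>k'\<le>k. ph x k' = c"
proof (induction k arbitrary: c)
  case 0 thus ?case by auto
next
  case (Suc k)
  show ?case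
  proof (cases "ph x (Suc k) = c")
    case True thus ?thesis by auto
  next
    case False
    with Suc.prems have "ph x k \<ge> c" using ph_step[of x k] by auto
    with Suc.IH Suc.prems show ?thesis using le_Suc_eq by blast
  qed
qed

lemma ivt_neg: "ph x k \<le> c \<Longrightarrow> c \<le> 0 \<Longrightarrow> \<exists>k'\<le>k. ph x k' = c"
proof (induction k arbitrary: c)
  case 0 thus ?case by auto
next
  case (Suc k)
  show ?case
  proof (cases "ph x (Suc k) = c")
    case True thus ?thesis by auto
  next
    case False
    with Suc.prems have "ph x k \<le> c" using ph_step[of x k] by auto
    with Suc.IH Suc.prems show ?thesis using le_Suc_eq by blast
  qed
qed

lemma ex_last: "Q k \<Longrightarrow> k < (N::nat) \<Longrightarrow> \<exists>m. Q m \<and> m < N \<and> (\<forall>k'. m < k' \<and> k' < N \<longrightarrow> \<not> Q k')"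
proof (induction N)
  case 0 thus ?case by simp
next
  case (Suc N)
  show ?case
  proof (cases "Q N")
    case True thus ?thesis by auto
  next
    case False
    then have "k < N" using Suc.prems by (metis less_SucE)
    then obtain m where "Q m" "m < N" "\<forall>k'. m < k' \<and> k' < N \<longrightarrow> \<not> Q k'" using Suc by blast
    thus ?thesis using False by (metis less_Suc_eq)
  qed
qed

lemma ex_first: "Q (k::nat) \<Longrightarrow> \<exists>m. Q m \<and> m \<le> k \<and> (\<forall>k'. k' < m \<longrightarrow> \<not> Q k')"
proof -
  assume q: "Q k"
  define m where "m = (LEAST m. Q m)"
  have "Q m" unfolding m_def using q by (rule LeastI[of Q])
  moreover have "m \<le> k" unfolding m_def using q by (rule Least_le)
  moreover have "\<forall>k'. k' < m \<longrightarrow> \<not> Q k'" unfolding m_def using not_less_Least by blast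
  ultimately show ?thesis by blast
qed



lemma core_lt:
  assumes a: "a \<in> Dyck" and a': "a' \<in> Dyck" and eq: "a @ s # r = a' @ s' # r'"
    and lt: "length a < length a'" and c: "\<not> s \<Longrightarrow> \<forall>k < length r. ph r k \<le> 0"
  shows False
proof -
  define m where "m = length a' - length a - 1"
  have "take (length a') (a @ s # r) = a'" using eq by simp
  hence a'eq: "a' = a @ s # take m r" using lt by (simp add: m_def take_Cons')
  have len: "length a' < length a + 1 + length r"
    using arg_cong[OF eq, of length] by simp
  hence mr: "m < length r" using lt by (simp add: m_def)
  have ha: "height a = 0" using a by (simp add: Dyck_iff)
  have ha': "height a' = 0" and pa': "\<forall>k. ph a' k \<le> 0" using a' by (simp_all add: Dyck_iff)
  show False
  proof (cases s)
    case True
    have "ph a' (Suc (length a)) = 1"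
      using a'eq ha by (simp add: ph_append ph_Cons stp_def True)
    thus False using pa' by (metis not_one_le_zero)
  next
    case False
    have "ph r m = 1" using ha' a'eq ha False by (simp add: stp_def ph_def)
    thus False using c[OF False] mr by auto
  qed
qed

lemma core:
  assumes a: "a \<in> Dyck" and a': "a' \<in> Dyck" and eq: "a @ s # r = a' @ s' # r'"
    and c: "\<not> s \<Longrightarrow> \<forall>k < length r. ph r k \<le> 0"
    and c': "\<not> s' \<Longrightarrow> \<forall>k < length r'. ph r' k \<le> 0"
  shows "a = a' \<and> s = s' \<and> r = r'"
proof -
  have "length a = length a'"
    using core_lt[OF a a' eq _ c] core_lt[OF a' a eq[symmetric] _ c'] by (meson linorder_neqE_nat)
  thus ?thesis using eq by simp
qed

fun joinr :: "nat \<Rightarrow> bool list list \<Rightarrow> bool list" where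
  "joinr i [] = []"
| "joinr i [u] = u"
| "joinr i (u # v # us) = u @ (0 < i) # joinr (i - 1) (v # us)"

lemma join_Cons_gen: "join i (u # us) = u @ concat (map (\<lambda>j. [Suc j \<le> i] @ us ! j) [0..<length us])"
  unfolding join_def by (simp add: upt_conv_Cons map_Suc_upt[symmetric] comp_def del: upt_Suc)

lemma join_joinr: "join i us = joinr i us"
proof (induction i us rule: joinr.induct)
  case (1 i) thus ?case by (simp add: join_def)
next
  case (2 i u) thus ?case by (simp add: join_Cons_gen)
next
  case (3 i u v us)
  have "join i (u # v # us) = u @ [1 \<le> i] @ v @ concat (map (\<lambda>j. [Suc (Suc j) \<le> i] @ us ! j) [0..<length us])"
    by (simp add: join_Cons_gen upt_conv_Cons map_Suc_upt[symmetric] comp_def del: upt_Suc)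
  also have "concat (map (\<lambda>j. [Suc (Suc j) \<le> i] @ us ! j) [0..<length us])
      = concat (map (\<lambda>j. [Suc j \<le> i - 1] @ us ! j) [0..<length us])"
    by (rule arg_cong[where f=concat], rule map_cong) auto
  finally show ?case using 3 by (simp add: join_Cons_gen Suc_le_eq)
qed



definition TW :: "bool list \<Rightarrow> int \<Rightarrow> bool" where
  "TW x c \<longleftrightarrow> (\<exists>k1 k2. k1 < k2 \<and> k2 \<le> length x \<and> ph x k1 = c \<and> ph x k2 = c)"

lemma ph_sep: "ph (u @ s # r) k = (if k \<le> length u then ph u k else height u + stp s + ph r (k - length u - 1))"
  by (simp add: ph_append ph_Cons)

lemma Dyck_le: "u \<in> Dyck \<Longrightarrow> ph u k \<le> 0" by (simp add: Dyck_iff)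
lemma Dyck_h: "u \<in> Dyck \<Longrightarrow> height u = 0" by (simp add: Dyck_iff)

lemma TW_Dyck: "u \<in> Dyck \<Longrightarrow> TW u 0 \<longleftrightarrow> u \<noteq> []"
proof
  assume "TW u 0" thus "u \<noteq> []" unfolding TW_def by auto
next
  assume "u \<in> Dyck" "u \<noteq> []"
  thus "TW u 0" unfolding TW_def
    by (intro exI[of _ 0] exI[of _ "length u"]) (auto simp: Dyck_h)
qed

lemma joinr_props:
  assumes "set us \<subseteq> Dyck" "i < length us"
  shows "(\<forall>k. ph (joinr i us) k \<le> int i) \<and> (\<exists>k. ph (joinr i us) k = int i)
    \<and> height (joinr i us) = 2 * int i - (int (length us) - 1)
    \<and> (TW (joinr i us) (int i) \<longleftrightarrow> us ! i \<noteq> [])"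
  using assms
proof (induction i us rule: joinr.induct)
  case (1 i) thus ?case by simp
next
  case (2 i u)
  hence u: "u \<in> Dyck" and i: "i = 0" by auto
  show ?case using u i TW_Dyck[OF u] Dyck_le[OF u] Dyck_h[OF u] by (auto intro: exI[of _ 0])
next
  case (3 i u v us)
  have u: "u \<in> Dyck" using "3.prems" by auto
  have hu: "height u = 0" using Dyck_h[OF u] .
  show ?case
  proof (cases "0 < i")
    case True
    define r where "r = joinr (i - 1) (v # us)"
    have IH: "(\<forall>k. ph r k \<le> int (i - 1)) \<and> (\<exists>k. ph r k = int (i - 1))
      \<and> height r = 2 * int (i - 1) - (int (length (v # us)) - 1)
      \<and> (TW r (int (i - 1)) \<longleftrightarrow> (v # us) ! (i - 1) \<noteq> [])"
      unfolding r_def using "3.IH" "3.prems" by simp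
    have x: "joinr i (u # v # us) = u @ True # r" using True by (simp add: r_def)
    have phx: "ph (u @ True # r) k = (if k \<le> length u then ph u k else 1 + ph r (k - length u - 1))" for k
      by (simp add: ph_sep hu stp_def)
    have A: "\<forall>k. ph (u @ True # r) k \<le> int i"
    proof
      fix k show "ph (u @ True # r) k \<le> int i"
        using IH[THEN conjunct1, rule_format, of "k - length u - 1"] Dyck_le[OF u, of k] True by (simp add: phx)
    qed
    obtain k0 where k0: "ph r k0 = int (i - 1)" using IH by blast
    have B: "ph (u @ True # r) (length u + 1 + k0) = int i" using k0 True by (simp add: phx)
    have Cc: "height (u @ True # r) = 2 * int i - (int (length (u # v # us)) - 1)"
      using IH True hu by (simp add: stp_def)
    have D: "TW (u @ True # r) (int i) \<longleftrightarrow> TW r (int (i - 1))"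
    proof
      assume "TW (u @ True # r) (int i)"
      then obtain k1 k2 where kk: "k1 < k2" "k2 \<le> length (u @ True # r)"
        "ph (u @ True # r) k1 = int i" "ph (u @ True # r) k2 = int i" unfolding TW_def by blast
      have "\<not> k1 \<le> length u" using kk(3) Dyck_le[OF u, of k1] True by (auto simp: phx)
      thus "TW r (int (i - 1))" unfolding TW_def using kk True
        by (intro exI[of _ "k1 - length u - 1"] exI[of _ "k2 - length u - 1"]) (auto simp: phx split: if_splits)
    next
      assume "TW r (int (i - 1))"
      then obtain l1 l2 where ll: "l1 < l2" "l2 \<le> length r" "ph r l1 = int (i - 1)" "ph r l2 = int (i - 1)"
        unfolding TW_def by blast
      thus "TW (u @ True # r) (int i)" unfolding TW_def using True
        by (intro exI[of _ "length u + 1 + l1"] exI[of _ "length u + 1 + l2"]) (auto simp: phx)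
    qed
    show ?thesis unfolding x using A B Cc D IH True by auto
  next
    case False
    hence i0: "i = 0" by simp
    define r where "r = joinr 0 (v # us)"
    have IH: "(\<forall>k. ph r k \<le> 0) \<and> height r = - (int (length (v # us)) - 1)"
      unfolding r_def using "3.IH" "3.prems" i0 by simp
    have x: "joinr i (u # v # us) = u @ False # r" using i0 by (simp add: r_def)
    have phx: "ph (u @ False # r) k = (if k \<le> length u then ph u k else - 1 + ph r (k - length u - 1))" for k
      by (simp add: ph_sep hu stp_def)
    have A: "\<forall>k. ph (u @ False # r) k \<le> 0"
    proof
      fix k show "ph (u @ False # r) k \<le> 0"
        using IH[THEN conjunct1, rule_format, of "k - length u - 1"] Dyck_le[OF u, of k] by (simp add: phx)
    qed
    have Cc: "height (u @ False # r) = 2 * int i - (int (length (u # v # us)) - 1)"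
      using IH i0 hu by (simp add: stp_def)
    have D: "TW (u @ False # r) 0 \<longleftrightarrow> u \<noteq> []"
    proof
      assume "TW (u @ False # r) 0"
      then obtain k1 k2 where kk: "k1 < k2" "ph (u @ False # r) k2 = 0" unfolding TW_def by blast
      have "k2 \<le> length u" using kk(2) IH by (simp add: phx split: if_splits) (smt (verit))
      thus "u \<noteq> []" using kk(1) by auto
    next
      assume "u \<noteq> []"
      thus "TW (u @ False # r) 0" unfolding TW_def
        by (intro exI[of _ 0] exI[of _ "length u"]) (auto simp: phx hu)
    qed
    show ?thesis unfolding x using A Cc D i0 by (auto intro: exI[of _ 0])
  qed
qed



lemma ph_take: "ph (take m x) k = ph x (min k m)"
  by (simp add: ph_def min_def)

lemma split_first:
  assumes "ph x k \<ge> 1"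
  shows "\<exists>a r. x = a @ True # r \<and> a \<in> Dyck"
proof -
  obtain k1 where "ph x k1 = 1" using ivt[OF assms] by auto
  then obtain m where m: "ph x m = 1" "\<forall>k'. k' < m \<longrightarrow> ph x k' \<noteq> 1"
    using ex_first[of "\<lambda>k. ph x k = 1"] by blast
  have m0: "m \<noteq> 0"
  proof
    assume "m = 0" thus False using m(1) by simp
  qed
  have mlen: "m \<le> length x"
  proof (rule ccontr)
    assume "\<not> m \<le> length x"
    hence "ph x (length x) = 1" using m(1) ph_ge[of x m] by simp
    thus False using m(2) \<open>\<not> m \<le> length x\<close> by (meson not_le)
  qed
  have lt1: "ph x k' < 1" if "k' < m" for k'
  proof (rule ccontr)
    assume "\<not> ph x k' < 1"
    then obtain k'' where "k'' \<le> k'" "ph x k'' = 1" using ivt[of 1 x k'] by auto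
    thus False using m(2) that by auto
  qed
  define j where "j = m - 1"
  have jm: "Suc j = m" "j < length x" using m0 mlen by (auto simp: j_def)
  have s: "ph x m = ph x j + stp (x ! j)" using ph_Suc[OF jm(2)] jm(1) by simp
  have "ph x j < 1" using lt1 jm by auto
  hence xj: "x ! j" and hj: "ph x j = 0" using s m(1) by (auto simp: stp_def split: if_splits)
  have x: "x = take j x @ x ! j # drop (Suc j) x" using jm(2) by (simp add: id_take_nth_drop)
  have "take j x \<in> Dyck" unfolding Dyck_iff
    using hj lt1 jm by (auto simp: ph_take ph_def[symmetric] min_def) (smt (verit) less_Suc_eq_le)
  thus ?thesis using x xj by metis
qed

lemma split_last:
  assumes le: "\<forall>k. ph x k \<le> 0" and neg: "height x < 0"
  shows "\<exists>a r. x = a @ False # r \<and> a \<in> Dyck \<and> (\<forall>k. ph r k \<le> 0) \<and> height r = height x + 1"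
proof -
  have n0: "0 < length x" using neg by (cases x) auto
  obtain m where m: "ph x m = 0" "m < length x" "\<forall>k'. m < k' \<and> k' < length x \<longrightarrow> ph x k' \<noteq> 0"
    using ex_last[of "\<lambda>k. ph x k = 0" 0 "length x"] n0 by auto
  have after: "ph x k < 0" if "m < k" for k
  proof (cases "k < length x")
    case True thus ?thesis using m(3) le that by (meson order_le_less)
  next
    case False thus ?thesis using ph_ge[of x k] neg by simp
  qed
  have "ph x (Suc m) = stp (x ! m)" using ph_Suc[OF m(2)] m(1) by simp
  hence xm: "\<not> x ! m" using after[of "Suc m"] by (auto simp: stp_def split: if_splits)
  define a where "a = take m x"
  define r where "r = drop (Suc m) x"
  have x: "x = a @ False # r" using m(2) xm unfolding a_def r_def by (metis id_take_nth_drop)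
  have la: "length a = m" using m(2) by (simp add: a_def)
  have ha: "height a = 0" using m(1) by (simp add: a_def ph_def)
  have "a \<in> Dyck" unfolding Dyck_iff using ha le by (auto simp: a_def ph_take)
  moreover have "ph r k \<le> 0" for k
  proof -
    have "ph x (m + 1 + k) = -1 + ph r k" using ha la
      by (subst x) (simp add: ph_sep stp_def)
    thus ?thesis using after[of "m + 1 + k"] by simp
  qed
  moreover have "height r = height x + 1" using x ha by (simp add: stp_def)
  ultimately show ?thesis using x by blast
qed

lemma joinr_exists:
  assumes "\<forall>k. ph x k \<le> int i" "\<exists>k. ph x k = int i" "height x = 2 * int i - int h" "i \<le> h"
  shows "\<exists>us. length us = Suc h \<and> set us \<subseteq> Dyck \<and> x = joinr i us"
  using assms
proof (induction h arbitrary: x i)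
  case 0
  hence "x \<in> Dyck" by (simp add: Dyck_iff)
  thus ?case by (intro exI[of _ "[x]"]) simp
next
  case (Suc h)
  show ?case
  proof (cases "0 < i")
    case True
    obtain k where k: "ph x k = int i" using Suc.prems by blast
    obtain a r where x: "x = a @ True # r" and a: "a \<in> Dyck"
      using split_first[of x k] k True by auto
    have ha: "height a = 0" using Dyck_h[OF a] .
    have phx: "ph x k = (if k \<le> length a then ph a k else 1 + ph r (k - length a - 1))" for k
      using x by (simp add: ph_sep ha stp_def)
    have r1: "\<forall>l. ph r l \<le> int (i - 1)"
    proof
      fix l show "ph r l \<le> int (i - 1)"
        using Suc.prems(1)[rule_format, of "length a + 1 + l"] True by (simp add: phx)
    qed
    have "\<not> k \<le> length a" using k phx[of k] Dyck_le[OF a, of k] True by auto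
    hence r2: "ph r (k - length a - 1) = int (i - 1)" using k True by (simp add: phx)
    have r3: "height r = 2 * int (i - 1) - int h" using Suc.prems(3) x ha True by (simp add: stp_def)
    obtain us where us: "length us = Suc h" "set us \<subseteq> Dyck" "r = joinr (i - 1) us"
      using Suc.IH[OF r1 _ r3] r2 Suc.prems(4) by fastforce
    then obtain v vs where vv: "us = v # vs" by (cases us) auto
    show ?thesis using us a True x vv by (intro exI[of _ "a # us"]) auto
  next
    case False
    hence i0: "i = 0" by simp
    obtain a r where x: "x = a @ False # r" and a: "a \<in> Dyck" and r1: "\<forall>k. ph r k \<le> 0"
      and r3: "height r = height x + 1"
      using split_last[of x] Suc.prems i0 by auto
    have r3': "height r = 2 * int 0 - int h" using r3 Suc.prems(3) i0 by simp
    have r2: "\<exists>k. ph r k = int 0" by (intro exI[of _ 0]) simp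
    obtain us where us: "length us = Suc h" "set us \<subseteq> Dyck" "r = joinr 0 us"
      using Suc.IH[of r 0] r1 r2 r3' by auto
    then obtain v vs where vv: "us = v # vs" by (cases us) auto
    show ?thesis using us a i0 x vv by (intro exI[of _ "a # us"]) auto
  qed
qed

lemma joinr_inj:
  assumes "set us \<subseteq> Dyck" "set us' \<subseteq> Dyck" "length us = length us'" "joinr i us = joinr i us'"
  shows "us = us'"
  using assms
proof (induction i us arbitrary: us' rule: joinr.induct)
  case (1 i) thus ?case by simp
next
  case (2 i u) thus ?case by (cases us') auto
next
  case (3 i u v vs)
  obtain u' v' vs' where us': "us' = u' # v' # vs'" using "3.prems"(3)
    by (cases us'; cases "tl us'") auto
  have eq: "u @ (0 < i) # joinr (i - 1) (v # vs) = u' @ (0 < i) # joinr (i - 1) (v' # vs')"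
    using "3.prems"(4) us' by simp
  have c1: "\<forall>k < length (joinr (i - 1) (v # vs)). ph (joinr (i - 1) (v # vs)) k \<le> 0" if "\<not> 0 < i"
    using joinr_props[of "v # vs" 0] "3.prems"(1) that by auto
  have c2: "\<forall>k < length (joinr (i - 1) (v' # vs')). ph (joinr (i - 1) (v' # vs')) k \<le> 0" if "\<not> 0 < i"
    using joinr_props[of "v' # vs'" 0] "3.prems"(2) us' that by auto
  have "u = u' \<and> joinr (i - 1) (v # vs) = joinr (i - 1) (v' # vs')"
    using core[OF _ _ eq c1 c2] "3.prems"(1,2) us' by auto
  moreover have "v # vs = v' # vs'"
    using "3.IH"[of "v' # vs'"] "3.prems" us' calculation by auto
  ultimately show ?case using us' by simp
qed

lemma C_iff: "x \<in> C n h i \<longleftrightarrow> length x = n \<and> i \<le> h \<and> (\<forall>k. ph x k \<le> int i) \<and> (\<exists>k. ph x k = int i)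
   \<and> height x = 2 * int i - int h"
proof
  assume "x \<in> C n h i"
  then obtain us where us: "length x = n" "i \<le> h" "length us = Suc h" "set us \<subseteq> Dyck" "x = joinr i us"
    unfolding C_def by (auto simp: join_joinr)
  thus "length x = n \<and> i \<le> h \<and> (\<forall>k. ph x k \<le> int i) \<and> (\<exists>k. ph x k = int i) \<and> height x = 2 * int i - int h"
    using joinr_props[of us i] by auto
next
  assume a: "length x = n \<and> i \<le> h \<and> (\<forall>k. ph x k \<le> int i) \<and> (\<exists>k. ph x k = int i) \<and> height x = 2 * int i - int h"
  thus "x \<in> C n h i" using joinr_exists[of x i h] unfolding C_def by (auto simp: join_joinr)
qed

lemma Cminus_iff: "x \<in> Cminus n h i \<longleftrightarrow> x \<in> C n h i \<and> \<not> TW x (int i)"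
proof
  assume "x \<in> Cminus n h i"
  then obtain us where us: "length x = n" "i \<le> h" "length us = Suc h" "set us \<subseteq> Dyck" "x = joinr i us" "us ! i = []"
    unfolding Cminus_def by (auto simp: join_joinr)
  thus "x \<in> C n h i \<and> \<not> TW x (int i)"
    using joinr_props[of us i] unfolding C_def by (auto simp: join_joinr)
next
  assume a: "x \<in> C n h i \<and> \<not> TW x (int i)"
  then obtain us where us: "length x = n" "i \<le> h" "length us = Suc h" "set us \<subseteq> Dyck" "x = joinr i us"
    unfolding C_def by (auto simp: join_joinr)
  thus "x \<in> Cminus n h i"
    using joinr_props[of us i] a unfolding Cminus_def by (auto simp: join_joinr)
qed

lemma Cplus_iff: "x \<in> Cplus n h i \<longleftrightarrow> x \<in> C n h i \<and> TW x (int i)"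
proof
  assume "x \<in> Cplus n h i"
  then obtain us where us: "length x = n" "i \<le> h" "length us = Suc h" "set us \<subseteq> Dyck" "x = joinr i us" "us ! i \<noteq> []"
    unfolding Cplus_def by (auto simp: join_joinr)
  thus "x \<in> C n h i \<and> TW x (int i)"
    using joinr_props[of us i] unfolding C_def by (auto simp: join_joinr)
next
  assume a: "x \<in> C n h i \<and> TW x (int i)"
  then obtain us where us: "length x = n" "i \<le> h" "length us = Suc h" "set us \<subseteq> Dyck" "x = joinr i us"
    unfolding C_def by (auto simp: join_joinr)
  thus "x \<in> Cplus n h i"
    using joinr_props[of us i] a unfolding Cplus_def by (auto simp: join_joinr)
qed



definition mcond :: "nat \<Rightarrow> bool list \<Rightarrow> nat \<Rightarrow> bool" where
  "mcond p x j \<longleftrightarrow> j < length x \<and> j \<in> downs (dpath x) \<and>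
      card {j' \<in> downs (dpath x). scan_before (dpath x) j' j} = p"

lemma sb_ph: "scan_before w a b \<longleftrightarrow> ph w a > ph w b \<or> (ph w a = ph w b \<and> a > b)"
  by (simp add: scan_before_def ph_def)

lemma mcond_unique_lt:
  assumes "mcond p x j1" "mcond p x j2" "scan_before (dpath x) j1 j2"
  shows False
proof -
  let ?D = "downs (dpath x)"
  let ?S = "\<lambda>j. {j' \<in> ?D. scan_before (dpath x) j' j}"
  have fin: "finite (?S j2)" by (rule finite_subset[of _ "{..<length (dpath x)}"]) (auto simp: downs_def)
  have sub: "?S j1 \<subset> ?S j2"
  proof
    show "?S j1 \<subseteq> ?S j2" using assms(3) by (auto simp: sb_ph)
    have "j1 \<in> ?S j2" "j1 \<notin> ?S j1" using assms by (auto simp: sb_ph mcond_def)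
    thus "?S j1 \<noteq> ?S j2" by blast
  qed
  have "card (?S j1) < card (?S j2)" by (rule psubset_card_mono[OF fin sub])
  thus False using assms(1,2) by (simp add: mcond_def)
qed

lemma mcond_unique: "mcond p x j1 \<Longrightarrow> mcond p x j2 \<Longrightarrow> j1 = j2"
  using mcond_unique_lt[of p x j1 j2] mcond_unique_lt[of p x j2 j1]
  by (metis linorder_neqE_nat not_less_iff_gr_or_eq sb_ph)

lemma dpath_nth: "j < length x \<Longrightarrow> dpath x ! j = x ! j"
  by (simp add: dpath_def nth_append)

lemma mcond_down: "mcond p x j \<Longrightarrow> \<not> x ! j"
  by (auto simp: mcond_def downs_def dpath_nth)

lemma height_set_true: "j < length x \<Longrightarrow> \<not> x ! j \<Longrightarrow> height (x[j := True]) = height x + 2"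
  by (simp add: height_upd stp_def)

lemma hyp_adj_upd:
  assumes "j < length x" "x ! j \<noteq> b" shows "hyp_adj x (x[j := b])"
proof -
  have "{k. k < length x \<and> x ! k \<noteq> x[j := b] ! k} = {j}"
    using assms by (auto simp: nth_list_update)
  thus ?thesis by (simp add: hyp_adj_def)
qed

lemma hyp_adj_sym: "hyp_adj x y \<Longrightarrow> hyp_adj y x"
proof -
  assume a: "hyp_adj x y"
  have len: "length x = length y" using a by (simp add: hyp_adj_def)
  have eq: "{j. j < length y \<and> y ! j \<noteq> x ! j} = {j. j < length x \<and> x ! j \<noteq> y ! j}" using len by auto
  have c: "card {j. j < length x \<and> x ! j \<noteq> y ! j} = 1" using a unfolding hyp_adj_def by (rule conjunct2)
  show ?thesis unfolding hyp_adj_def eq using len c by simp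
qed

lemma edges_between_swap: "edges_between M Y X = edges_between M X Y"
proof -
  have ee: "(\<exists>x\<in>Y. \<exists>y\<in>X. e = {x, y}) \<longleftrightarrow> (\<exists>x\<in>X. \<exists>y\<in>Y. e = {x, y})" for e
    by (auto simp: doubleton_eq_iff)
  show ?thesis unfolding edges_between_def using ee by blast
qed

lemma pm_swap:
  assumes a: "perfect_matching_between (edges_between M X Y) X Y"
  shows "perfect_matching_between (edges_between M Y X) Y X"
proof -
  have all: "X \<inter> Y = {} \<and> (\<forall>e\<in>edges_between M X Y. \<exists>x\<in>X. \<exists>y\<in>Y. e = {x, y} \<and> hyp_adj x y)
    \<and> (\<forall>v\<in>X \<union> Y. \<exists>!e. e \<in> edges_between M X Y \<and> v \<in> e)"
    using a unfolding perfect_matching_between_def .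
  note a1 = all[THEN conjunct1] and a2 = all[THEN conjunct2, THEN conjunct1]
    and a3 = all[THEN conjunct2, THEN conjunct2]
  have b2: "\<forall>e\<in>edges_between M X Y. \<exists>x\<in>Y. \<exists>y\<in>X. e = {x, y} \<and> hyp_adj x y"
  proof
    fix e assume "e \<in> edges_between M X Y"
    then obtain x y where xy: "x \<in> X" "y \<in> Y" "e = {x, y}" "hyp_adj x y" using a2 by blast
    have "e = {y, x}" using xy(3) by (simp add: insert_commute)
    thus "\<exists>x\<in>Y. \<exists>y\<in>X. e = {x, y} \<and> hyp_adj x y" using xy hyp_adj_sym by blast
  qed
  have b1: "Y \<inter> X = {}" using a1 by blast
  have b3: "\<forall>v\<in>Y \<union> X. \<exists>!e. e \<in> edges_between M X Y \<and> v \<in> e" using a3 by (simp only: Un_commute)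
  show ?thesis unfolding perfect_matching_between_def edges_between_swap[of M Y X]
    by (rule conjI[OF b1 conjI[OF b2 b3]])
qed

lemma mlex_pm:
  fixes L U :: "bool list set" and P :: "bool list \<Rightarrow> nat \<Rightarrow> bool" and c :: int
  assumes lenL: "\<And>x. x \<in> L \<Longrightarrow> length x = n"
    and hL: "\<And>x. x \<in> L \<Longrightarrow> height x = c" and hU: "\<And>y. y \<in> U \<Longrightarrow> height y = c + 2"
    and ex: "\<And>x. x \<in> L \<Longrightarrow> \<exists>j. P x j"
    and good: "\<And>x j. x \<in> L \<Longrightarrow> P x j \<Longrightarrow> mcond p x j \<and> x[j := True] \<in> U"
    and srj: "\<And>y. y \<in> U \<Longrightarrow> \<exists>x j. x \<in> L \<and> P x j \<and> x[j := True] = y"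
    and inj: "\<And>x1 x2 j1 j2. x1 \<in> L \<Longrightarrow> x2 \<in> L \<Longrightarrow> P x1 j1 \<Longrightarrow> P x2 j2 \<Longrightarrow>
         x1[j1 := True] = x2[j2 := True] \<Longrightarrow> x1 = x2"
  shows "perfect_matching_between (edges_between (Mlex n p) L U) L U"
proof -
  have PL: "P x j" if xL: "x \<in> L" and mc: "mcond p x j" for x j
  proof -
    obtain j0 where "P x j0" using ex xL by blast
    moreover have "j = j0" using mcond_unique[OF mc] good[OF xL \<open>P x j0\<close>] by blast
    ultimately show ?thesis by simp
  qed
  have nU: "x \<notin> U" if "x \<in> L" for x using hL[OF that] hU[of x] by auto
  have disj: "L \<inter> U = {}" using nU by blast
  have Echar: "e \<in> edges_between (Mlex n p) L U \<longleftrightarrow> (\<exists>x j. x \<in> L \<and> P x j \<and> e = {x, x[j := True]})" for e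
  proof
    assume "e \<in> edges_between (Mlex n p) L U"
    hence e1: "e \<in> Mlex n p" and e2: "\<exists>x\<in>L. \<exists>y\<in>U. e = {x, y}" unfolding edges_between_def by auto
    obtain a j where ea: "e = {a, a[j := True]}" "length a = n" "mcond p a j"
      using e1 unfolding Mlex_def mcond_def by auto
    obtain x y where exy: "x \<in> L" "y \<in> U" "e = {x, y}" using e2 by blast
    note e = ea exy
    have ha: "height (a[j := True]) = height a + 2"
      using e(3) mcond_down[OF e(3)] by (simp add: mcond_def height_set_true)
    have "a = x \<and> a[j := True] = y \<or> a = y \<and> a[j := True] = x" using e by (metis doubleton_eq_iff)
    moreover have "\<not> (a = y \<and> a[j := True] = x)" using ha hL[OF e(4)] hU[OF e(5)] by auto
    ultimately have "a = x" by blast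
    thus "\<exists>x j. x \<in> L \<and> P x j \<and> e = {x, x[j := True]}" using e PL by blast
  next
    assume "\<exists>x j. x \<in> L \<and> P x j \<and> e = {x, x[j := True]}"
    then obtain x j where xj: "x \<in> L" "P x j" "e = {x, x[j := True]}" by blast
    have mc: "mcond p x j" and xU: "x[j := True] \<in> U" using good[OF xj(1,2)] by auto
    have m: "length x = n \<and> j < length x \<and> j \<in> downs (dpath x) \<and>
      card {j' \<in> downs (dpath x). scan_before (dpath x) j' j} = p"
      using mc lenL[OF xj(1)] by (simp add: mcond_def)
    have "e \<in> Mlex n p" unfolding Mlex_def using xj(3) m by blast
    thus "e \<in> edges_between (Mlex n p) L U" unfolding edges_between_def using xj(1,3) xU by blast
  qed
  have adj: "hyp_adj x (x[j := True])" if "x \<in> L" "P x j" for x j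
    using good[OF that] mcond_down[of p x j] by (intro hyp_adj_upd) (auto simp: mcond_def)
  show ?thesis unfolding perfect_matching_between_def
  proof (intro conjI ballI)
    show "L \<inter> U = {}" by fact
  next
    fix e assume "e \<in> edges_between (Mlex n p) L U"
    then obtain x j where "x \<in> L" "P x j" "e = {x, x[j := True]}" using Echar by blast
    thus "\<exists>x\<in>L. \<exists>y\<in>U. e = {x, y} \<and> hyp_adj x y" using good adj by blast
  next
    fix v assume "v \<in> L \<union> U"
    thus "\<exists>!e. e \<in> edges_between (Mlex n p) L U \<and> v \<in> e"
    proof
      assume v: "v \<in> L"
      obtain j where j: "P v j" using ex[OF v] by blast
      show ?thesis
      proof (rule ex1I[of _ "{v, v[j := True]}"])
        show "{v, v[j := True]} \<in> edges_between (Mlex n p) L U \<and> v \<in> {v, v[j := True]}"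
          using Echar v j by blast
      next
        fix e assume "e \<in> edges_between (Mlex n p) L U \<and> v \<in> e"
        then obtain x j' where xj: "x \<in> L" "P x j'" "e = {x, x[j' := True]}" "v \<in> e" using Echar by blast
        have "v \<noteq> x[j' := True]" using good[OF xj(1,2)] v disj by blast
        hence "v = x" using xj by auto
        moreover have "j' = j" using good[OF xj(1,2)] good[OF v j] calculation mcond_unique by blast
        ultimately show "e = {v, v[j := True]}" using xj by simp
      qed
    next
      assume v: "v \<in> U"
      obtain x j where xj: "x \<in> L" "P x j" "x[j := True] = v" using srj[OF v] by blast
      show ?thesis
      proof (rule ex1I[of _ "{x, v}"])
        show "{x, v} \<in> edges_between (Mlex n p) L U \<and> v \<in> {x, v}"
          using Echar xj by blast
      next
        fix e assume "e \<in> edges_between (Mlex n p) L U \<and> v \<in> e"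
        then obtain x' j' where xj': "x' \<in> L" "P x' j'" "e = {x', x'[j' := True]}" "v \<in> e" using Echar by blast
        have "v \<noteq> x'" using xj'(1) v disj by blast
        hence "v = x'[j' := True]" using xj' by auto
        hence "x' = x" using inj[OF xj'(1) xj(1) xj'(2) xj(2)] xj(3) by simp
        thus "e = {x, v}" using xj' \<open>v = x'[j' := True]\<close> by simp
      qed
    qed
  qed
qed



lemma height_repF: "height (replicate m False) = - int m"
  by (induction m) (auto simp: stp_def)

lemma dpath_cases: "dpath x = x @ replicate (nat (height x + 1)) False"
  by (simp add: dpath_def)

lemma ph_dpath_le: "k \<le> length x \<Longrightarrow> ph (dpath x) k = ph x k"
  by (simp add: dpath_cases ph_append)

lemma ph_dpath_gt:
  assumes "length x < k" "k \<le> length (dpath x)"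
  shows "ph (dpath x) k < height x"
proof -
  have "ph (dpath x) k = height x + ph (replicate (nat (height x + 1)) False) (k - length x)"
    using assms(1) by (simp add: dpath_cases ph_append)
  also have "ph (replicate (nat (height x + 1)) False) (k - length x) = - int (k - length x)"
    using assms by (simp add: ph_def take_replicate height_repF dpath_cases min_def)
  finally show ?thesis using assms(1) by simp
qed

lemma ph_dpath_bound:
  assumes "k \<le> length (dpath x)" "\<forall>k. ph x k \<le> c" "height x \<le> c"
  shows "ph (dpath x) k \<le> c"
proof (cases "k \<le> length x")
  case True thus ?thesis using assms by (simp add: ph_dpath_le)
next
  case False thus ?thesis using ph_dpath_gt[of x k] assms by simp
qed

lemma dpath_len: "length (dpath x) = length x + nat (height x + 1)"
  by (simp add: dpath_cases)

lemma dpath_nth_ge: "length x \<le> k \<Longrightarrow> k < length (dpath x) \<Longrightarrow> \<not> dpath x ! k"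
  by (simp add: dpath_cases nth_append)

lemma downs_iff: "j \<in> downs w \<longleftrightarrow> j < length w \<and> \<not> w ! j"
  by (simp add: downs_def)

lemma down_dpath: "j < length x \<Longrightarrow> \<not> x ! j \<Longrightarrow> j \<in> downs (dpath x)"
  by (simp add: downs_iff dpath_nth dpath_len)

lemma card_sb_0:
  assumes "\<forall>j'. j' \<in> downs (dpath x) \<longrightarrow> \<not> scan_before (dpath x) j' j"
  shows "card {j' \<in> downs (dpath x). scan_before (dpath x) j' j} = 0"
proof -
  have "{j' \<in> downs (dpath x). scan_before (dpath x) j' j} = {}" using assms by blast
  thus ?thesis by (simp only: card.empty)
qed

lemma card_sb_1:
  assumes "t \<in> downs (dpath x)" "scan_before (dpath x) t j"
    "\<forall>j'. j' \<in> downs (dpath x) \<longrightarrow> scan_before (dpath x) j' j \<longrightarrow> j' = t"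
  shows "card {j' \<in> downs (dpath x). scan_before (dpath x) j' j} = 1"
proof -
  have "{j' \<in> downs (dpath x). scan_before (dpath x) j' j} = {t}" using assms by blast
  thus ?thesis by simp
qed

lemma stpT[simp]: "stp True = 1" and stpF[simp]: "stp False = -1" by (simp_all add: stp_def)

lemma ph_setT: "j < length x \<Longrightarrow> \<not> x ! j \<Longrightarrow> ph (x[j := True]) k = ph x k + (if j < k then 2 else 0)"
  by (simp add: ph_upd)

lemma ph_setF: "j < length x \<Longrightarrow> x ! j \<Longrightarrow> ph (x[j := False]) k = ph x k - (if j < k then 2 else 0)"
  by (simp add: ph_upd)

lemma upd_back: "\<not> x ! j \<Longrightarrow> x[j := True, j := False] = x"
  by (metis list_update_id list_update_overwrite)

lemma upd_back': "y ! j \<Longrightarrow> y[j := False, j := True] = y"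
  by (metis list_update_id list_update_overwrite)

lemma inj_first_lt:
  assumes "j1 < length x1" "j2 < length x2" "\<not> x1 ! j1" "\<not> x2 ! j2" "ph x1 j1 = c"
    "\<forall>k. ph x2 k \<le> c" "x1[j1 := True] = x2[j2 := True]" "j1 < j2"
  shows False
proof -
  have "ph (x1[j1 := True]) (Suc j1) = c + 1"
    using assms(1,3,5) ph_Suc[of j1 x1] by (simp add: ph_setT)
  moreover have "ph (x2[j2 := True]) (Suc j1) \<le> c"
    using assms(2,4,6,8) by (simp add: ph_setT)
  ultimately show False using assms(7) by simp
qed

lemma inj_first:
  assumes "j1 < length x1" "j2 < length x2" "\<not> x1 ! j1" "\<not> x2 ! j2" "ph x1 j1 = c" "ph x2 j2 = c"
    "\<forall>k. ph x1 k \<le> c" "\<forall>k. ph x2 k \<le> c" "x1[j1 := True] = x2[j2 := True]"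
  shows "x1 = x2"
proof -
  have "j1 = j2"
    using inj_first_lt[of j1 x1 j2 x2 c] inj_first_lt[of j2 x2 j1 x1 c] assms
    by (metis linorder_neqE_nat)
  thus ?thesis using assms(3,4,9) upd_back by metis
qed

definition P0 :: "nat \<Rightarrow> bool list \<Rightarrow> nat \<Rightarrow> bool" where
  "P0 i x j \<longleftrightarrow> j < length x \<and> \<not> x ! j \<and> ph x j = int i \<and> (\<forall>k. ph x k \<le> int i)
     \<and> (\<forall>k. j < k \<longrightarrow> ph x k < int i)"

lemma case_i:
  assumes ih: "i < h"
  shows "perfect_matching_between (edges_between (Mlex n 0) (C n h i) (C n h (i + 1))) (C n h i) (C n h (i + 1))"
proof (rule mlex_pm[where P = "P0 i" and c = "2 * int i - int h"])
  fix x assume "x \<in> C n h i"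
  thus "length x = n" "height x = 2 * int i - int h" by (simp_all add: C_iff)
next
  fix y assume "y \<in> C n h (i + 1)"
  thus "height y = 2 * int i - int h + 2" by (simp add: C_iff)
next
  fix x assume x: "x \<in> C n h i"
  hence le: "\<forall>k. ph x k \<le> int i" and hx: "height x = 2 * int i - int h" and ex: "\<exists>k. ph x k = int i"
    by (simp_all add: C_iff)
  obtain k where k: "ph x k = int i" using ex by blast
  have kn: "k < length x"
  proof (rule ccontr)
    assume "\<not> k < length x" thus False using k ph_ge[of x k] hx ih by simp
  qed
  obtain m where m: "ph x m = int i" "m < length x" "\<forall>k'. m < k' \<and> k' < length x \<longrightarrow> ph x k' \<noteq> int i"
    using ex_last[of "\<lambda>k. ph x k = int i", OF k kn] by blast
  have after: "ph x k' < int i" if "m < k'" for k'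
  proof (cases "k' < length x")
    case True thus ?thesis using m(3) le that by (meson order_le_less)
  next
    case False thus ?thesis using ph_ge[of x k'] hx ih by simp
  qed
  have "ph x (Suc m) = int i + stp (x ! m)" using ph_Suc[OF m(2)] m(1) by simp
  hence "\<not> x ! m" using after[of "Suc m"] by (auto simp: stp_def split: if_splits)
  thus "\<exists>j. P0 i x j" unfolding P0_def using m le after by blast
next
  fix x j assume x: "x \<in> C n h i" and P: "P0 i x j"
  hence le: "\<forall>k. ph x k \<le> int i" and hx: "height x = 2 * int i - int h" and len: "length x = n"
    by (simp_all add: C_iff)
  from P have j: "j < length x" "\<not> x ! j" "ph x j = int i" "\<forall>k. j < k \<longrightarrow> ph x k < int i"
    by (simp_all add: P0_def)
  have "mcond 0 x j" unfolding mcond_def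
  proof (intro conjI)
    show "j < length x" "j \<in> downs (dpath x)" using j by (simp_all add: down_dpath)
    have "\<not> scan_before (dpath x) j' j" if j': "j' \<in> downs (dpath x)" for j'
    proof -
      have j'l: "j' < length (dpath x)" using j' by (simp add: downs_iff)
      have hj: "ph (dpath x) j = int i" using j by (simp add: ph_dpath_le)
      show ?thesis
      proof (cases "j' \<le> length x")
        case True thus ?thesis using le j hj by (auto simp: sb_ph ph_dpath_le not_less)
      next
        case False
        hence "ph (dpath x) j' < height x" using ph_dpath_gt[of x j'] j'l by simp
        moreover have "height x < int i" using j(4)[rule_format, of "length x"] j(1) by simp
        ultimately show ?thesis using hj by (simp add: sb_ph)
      qed
    qed
    thus "card {j' \<in> downs (dpath x). scan_before (dpath x) j' j} = 0" by (intro card_sb_0) blast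
  qed
  moreover have "x[j := True] \<in> C n h (i + 1)"
    unfolding C_iff
  proof (intro conjI)
    show "length (x[j := True]) = n" using len by simp
    show "i + 1 \<le> h" using ih by simp
    show "\<forall>k. ph (x[j := True]) k \<le> int (i + 1)"
      using j le by (auto simp: ph_setT) (smt (verit))
    have "ph x (Suc j) = int i - 1" using ph_Suc[OF j(1)] j by simp
    hence "ph (x[j := True]) (Suc j) = int (i + 1)" using j by (simp add: ph_setT)
    thus "\<exists>k. ph (x[j := True]) k = int (i + 1)" by blast
    show "height (x[j := True]) = 2 * int (i + 1) - int h" using j hx by (simp add: height_set_true)
  qed
  ultimately show "mcond 0 x j \<and> x[j := True] \<in> C n h (i + 1)" by simp
next
  fix y assume y: "y \<in> C n h (i + 1)"
  hence le: "\<forall>k. ph y k \<le> int i + 1" and hy: "height y = 2 * int i + 2 - int h" and len: "length y = n"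
    and ex: "\<exists>k. ph y k = int i + 1" by (simp_all add: C_iff add.commute)
  obtain k where "ph y k = int i + 1" using ex by blast
  then obtain m where m: "ph y m = int i + 1" "\<forall>k'. k' < m \<longrightarrow> ph y k' \<noteq> int i + 1"
    using ex_first[of "\<lambda>k. ph y k = int i + 1"] by blast
  have m0: "m \<noteq> 0" using m(1) by (cases m) auto
  have mlen: "m \<le> length y"
  proof (rule ccontr)
    assume a: "\<not> m \<le> length y"
    hence "ph y (length y) = int i + 1" using m(1) ph_ge[of y m] by simp
    thus False using m(2) a by (meson not_le)
  qed
  define j where "j = m - 1"
  have jm: "Suc j = m" "j < length y" using m0 mlen by (auto simp: j_def)
  have before: "ph y k \<le> int i" if "k < m" for k using le m(2) that by (smt (verit))
  have "ph y m = ph y j + stp (y ! j)" using ph_Suc[OF jm(2)] jm(1) by simp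
  moreover have "ph y j \<le> int i" using before jm by auto
  ultimately have yj: "y ! j" and hj: "ph y j = int i" using m(1) by (auto simp: stp_def split: if_splits)
  define x where "x = y[j := False]"
  have phx: "ph x k = ph y k - (if j < k then 2 else 0)" for k
    unfolding x_def using jm yj by (simp add: ph_setF)
  have P: "P0 i x j" unfolding P0_def
  proof (intro conjI allI impI)
    show "j < length x" "\<not> x ! j" using jm by (simp_all add: x_def)
    show "ph x j = int i" using hj by (simp add: phx)
    fix k
    show "ph x k \<le> int i"
      using before[of k] le[rule_format, of k] jm by (simp add: phx)
    show "j < k \<Longrightarrow> ph x k < int i" using le[rule_format, of k] by (simp add: phx)
  qed
  have "x \<in> C n h i" unfolding C_iff
  proof (intro conjI)
    show "length x = n" using len by (simp add: x_def)
    show "i \<le> h" using ih by simp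
    show "\<forall>k. ph x k \<le> int i" using P by (simp add: P0_def)
    show "\<exists>k. ph x k = int i" using P unfolding P0_def by blast
    show "height x = 2 * int i - int h" using hy jm yj by (simp add: x_def height_upd)
  qed
  moreover have "x[j := True] = y" using yj list_update_id[of y j] by (simp add: x_def)
  ultimately show "\<exists>x j. x \<in> C n h i \<and> P0 i x j \<and> x[j := True] = y" using P by blast
next
  fix x1 x2 j1 j2 assume "P0 i x1 j1" "P0 i x2 j2" "x1[j1 := True] = x2[j2 := True]"
  thus "x1 = x2" unfolding P0_def using inj_first[of j1 x1 j2 x2 "int i"] by blast
qed



lemma TW_intro: "a < b \<Longrightarrow> b \<le> length x \<Longrightarrow> ph x a = c \<Longrightarrow> ph x b = c \<Longrightarrow> TW x c"
  unfolding TW_def by blast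

lemma notTW: "\<not> TW x c \<Longrightarrow> a \<le> length x \<Longrightarrow> b \<le> length x \<Longrightarrow> ph x a = c \<Longrightarrow> ph x b = c \<Longrightarrow> a = b"
  by (metis TW_intro linorder_neqE_nat)

lemma visit_le: "ph x k = c \<Longrightarrow> \<exists>k'\<le>length x. ph x k' = c"
  by (metis le_refl nat_le_linear ph_ge ph_len)

lemma ph_drop: "m \<le> length y \<Longrightarrow> ph (drop m y) l = ph y (m + l) - ph y m"
  by (simp add: ph_def take_add)

lemma first_visit:
  assumes "ph y k \<ge> c" "c \<ge> 1"
  shows "\<exists>j. j < length y \<and> y ! j \<and> ph y j = c - 1 \<and> ph y (Suc j) = c \<and> (\<forall>k\<le>j. ph y k < c)"
proof -
  obtain k1 where "ph y k1 = c" using ivt[OF assms(1)] assms(2) by auto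
  then obtain m where m: "ph y m = c" "\<forall>k'. k' < m \<longrightarrow> ph y k' \<noteq> c"
    using ex_first[of "\<lambda>k. ph y k = c"] by blast
  have m0: "m \<noteq> 0" using m(1) assms(2) by (cases m) auto
  have mlen: "m \<le> length y"
  proof (rule ccontr)
    assume a: "\<not> m \<le> length y"
    hence c1: "ph y (length y) = c" using m(1) ph_ge[of y m] by simp
    have "length y < m" using a by simp
    thus False using m(2) c1 by blast
  qed
  have before: "ph y k < c" if "k < m" for k
  proof (rule ccontr)
    assume "\<not> ph y k < c"
    then obtain k' where "k' \<le> k" "ph y k' = c" using ivt[of c y k] assms(2) by auto
    thus False using m(2) that by auto
  qed
  define j where "j = m - 1"
  have jm: "Suc j = m" "j < length y" using m0 mlen by (auto simp: j_def)
  have "ph y m = ph y j + stp (y ! j)" using ph_Suc[OF jm(2)] jm(1) by simp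
  moreover have "ph y j < c" using before jm by auto
  ultimately have "y ! j" "ph y j = c - 1" using m(1) by (auto simp: stp_def split: if_splits)
  moreover have "\<forall>k\<le>j. ph y k < c" using before jm by auto
  ultimately show ?thesis using jm m(1) by blast
qed

definition P1a :: "nat \<Rightarrow> bool list \<Rightarrow> nat \<Rightarrow> bool" where
  "P1a i x j \<longleftrightarrow> j < length x \<and> \<not> x ! j \<and> ph x j = int i \<and> (\<forall>k. ph x k \<le> int i)
     \<and> (\<exists>t. j < t \<and> t \<le> length x \<and> ph x t = int i \<and>
          (\<forall>k. j < k \<longrightarrow> k \<le> length x \<longrightarrow> ph x k = int i \<longrightarrow> k = t))"

lemma case_iia:
  assumes ih: "i \<le> h"
  shows "perfect_matching_between (edges_between (Mlex n 1) (Cplus n h i) (Cminus n (h + 2) (i + 2)))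
     (Cplus n h i) (Cminus n (h + 2) (i + 2))"
proof (rule mlex_pm[where P = "P1a i" and c = "2 * int i - int h"])
  fix x assume "x \<in> Cplus n h i"
  thus "length x = n" "height x = 2 * int i - int h" by (simp_all add: Cplus_iff C_iff)
next
  fix y assume "y \<in> Cminus n (h + 2) (i + 2)"
  thus "height y = 2 * int i - int h + 2" by (simp add: Cminus_iff C_iff)
next
  fix x assume x: "x \<in> Cplus n h i"
  hence le: "\<forall>k. ph x k \<le> int i" and tw: "TW x (int i)"
    by (simp_all add: Cplus_iff C_iff)
  obtain k1 k2 where kk: "k1 < k2" "k2 \<le> length x" "ph x k1 = int i" "ph x k2 = int i"
    using tw unfolding TW_def by blast
  obtain t where t: "ph x t = int i" "t < Suc (length x)" "\<forall>k'. t < k' \<and> k' < Suc (length x) \<longrightarrow> ph x k' \<noteq> int i"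
    using ex_last[of "\<lambda>k. ph x k = int i" k2 "Suc (length x)"] kk(2,4) by (simp only: less_Suc_eq_le) blast
  have "k2 \<le> t"
  proof (rule ccontr)
    assume "\<not> k2 \<le> t" hence "t < k2" by simp
    thus False using t(3) kk(2,4) by simp
  qed
  hence "k1 < t" using kk by simp
  then obtain j where j: "ph x j = int i" "j < t" "\<forall>k'. j < k' \<and> k' < t \<longrightarrow> ph x k' \<noteq> int i"
    using ex_last[of "\<lambda>k. ph x k = int i" k1 t] kk(3) \<open>k1 < t\<close> by blast
  have jn: "j < length x" using j t by simp
  have "ph x (Suc j) = int i + stp (x ! j)" using ph_Suc[OF jn] j(1) by simp
  hence nxj: "\<not> x ! j" using le[rule_format, of "Suc j"] by (auto simp: stp_def split: if_splits)
  have uq: "\<forall>k. j < k \<longrightarrow> k \<le> length x \<longrightarrow> ph x k = int i \<longrightarrow> k = t"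
  proof (intro allI impI)
    fix k assume k: "j < k" "k \<le> length x" "ph x k = int i"
    show "k = t"
    proof (rule ccontr)
      assume "k \<noteq> t"
      hence "k < t \<or> t < k" by arith
      thus False
      proof
        assume "k < t" thus False using j(3) k by blast
      next
        assume "t < k" thus False using t(3) k by simp
      qed
    qed
  qed
  have tn: "t \<le> length x" using t(2) by simp
  have ext: "\<exists>t. j < t \<and> t \<le> length x \<and> ph x t = int i \<and>
          (\<forall>k. j < k \<longrightarrow> k \<le> length x \<longrightarrow> ph x k = int i \<longrightarrow> k = t)"
    using j(2) tn t(1) uq by blast
  have "P1a i x j" unfolding P1a_def using jn nxj j(1) le ext by (intro conjI)
  thus "\<exists>j. P1a i x j" by blast
next
  fix x j assume x: "x \<in> Cplus n h i" and P: "P1a i x j"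
  hence le: "\<forall>k. ph x k \<le> int i" and hx: "height x = 2 * int i - int h" and len: "length x = n"
    by (simp_all add: Cplus_iff C_iff)
  have j: "j < length x" "\<not> x ! j" "ph x j = int i" using P unfolding P1a_def by simp_all
  have "\<exists>t. j < t \<and> t \<le> length x \<and> ph x t = int i \<and> (\<forall>k. j < k \<longrightarrow> k \<le> length x \<longrightarrow> ph x k = int i \<longrightarrow> k = t)"
    using P unfolding P1a_def by (elim conjE)
  then obtain t where t: "j < t" "t \<le> length x" "ph x t = int i" "\<forall>k. j < k \<longrightarrow> k \<le> length x \<longrightarrow> ph x k = int i \<longrightarrow> k = t"
    by blast
  have hxi: "height x \<le> int i" using le ph_len[of x] by metis
  have "mcond 1 x j" unfolding mcond_def
  proof (intro conjI)
    show "j < length x" "j \<in> downs (dpath x)" using j by (simp_all add: down_dpath)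
    have hj: "ph (dpath x) j = int i" using j by (simp add: ph_dpath_le)
    have tD: "t \<in> downs (dpath x)"
    proof (cases "t < length x")
      case True
      have "ph x (Suc t) = int i + stp (x ! t)" using ph_Suc[OF True] t(3) by simp
      hence "\<not> x ! t" using le[rule_format, of "Suc t"] by (auto simp: stp_def split: if_splits)
      thus ?thesis using True by (simp add: down_dpath)
    next
      case False
      hence tn: "t = length x" using t(2) by simp
      hence "height x = int i" using t(3) by simp
      hence "length x < length (dpath x)" by (simp add: dpath_len)
      thus ?thesis using tn dpath_nth_ge[of x t] by (simp add: downs_iff)
    qed
    moreover have "scan_before (dpath x) t j" using t(1,2,3) hj by (simp add: sb_ph ph_dpath_le)
    moreover have "\<forall>j'. j' \<in> downs (dpath x) \<longrightarrow> scan_before (dpath x) j' j \<longrightarrow> j' = t"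
    proof (intro allI impI)
      fix j' assume j'a: "j' \<in> downs (dpath x)" and j'b: "scan_before (dpath x) j' j"
      note j' = j'a j'b
      have j'l: "j' \<le> length (dpath x)" using j' by (simp add: downs_iff)
      have "ph (dpath x) j' \<le> int i" using ph_dpath_bound[OF j'l le hxi] .
      hence a: "ph (dpath x) j' = int i" "j < j'" using j'(2) hj by (auto simp: sb_ph)
      show "j' = t"
      proof (cases "j' \<le> length x")
        case True thus ?thesis using a t(4) by (simp add: ph_dpath_le)
      next
        case False thus ?thesis using ph_dpath_gt[of x j'] j'l a hxi by simp
      qed
    qed
    ultimately show "card {j' \<in> downs (dpath x). scan_before (dpath x) j' j} = 1"
      by (rule card_sb_1)
  qed
  moreover have "x[j := True] \<in> Cminus n (h + 2) (i + 2)"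
    unfolding Cminus_iff C_iff
  proof (intro conjI)
    show "length (x[j := True]) = n" using len by simp
    show "i + 2 \<le> h + 2" using ih by simp
    show "\<forall>k. ph (x[j := True]) k \<le> int (i + 2)"
    proof
      fix k show "ph (x[j := True]) k \<le> int (i + 2)" using j(1,2) le[rule_format, of k] by (simp add: ph_setT)
    qed
    have "ph (x[j := True]) t = int (i + 2)" using j t(1,2,3) by (simp add: ph_setT)
    thus "\<exists>k. ph (x[j := True]) k = int (i + 2)" by blast
    show "height (x[j := True]) = 2 * int (i + 2) - int (h + 2)" using j hx by (simp add: height_set_true)
    show "\<not> TW (x[j := True]) (int (i + 2))"
    proof
      assume "TW (x[j := True]) (int (i + 2))"
      then obtain k1 k2 where kk: "k1 < k2" "k2 \<le> length x" "ph (x[j := True]) k1 = int (i + 2)"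
        "ph (x[j := True]) k2 = int (i + 2)" unfolding TW_def by auto
      have "j < k1 \<and> ph x k1 = int i" using kk(3) le[rule_format, of k1] j(1,2) by (simp add: ph_setT split: if_splits)
      moreover have "j < k2 \<and> ph x k2 = int i" using kk(4) le[rule_format, of k2] j(1,2) by (simp add: ph_setT split: if_splits)
      ultimately show False using t(4)[rule_format, of k1] t(4)[rule_format, of k2] kk by simp
    qed
  qed
  ultimately show "mcond 1 x j \<and> x[j := True] \<in> Cminus n (h + 2) (i + 2)" by simp
next
  fix y assume y: "y \<in> Cminus n (h + 2) (i + 2)"
  hence le: "\<forall>k. ph y k \<le> int i + 2" and hy: "height y = 2 * int i + 2 - int h" and len: "length y = n"
    and ex: "\<exists>k. ph y k = int i + 2" and ntw: "\<not> TW y (int i + 2)"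
    by (simp_all add: Cminus_iff C_iff add.commute)
  obtain t where t: "t \<le> length y" "ph y t = int i + 2" using ex visit_le by blast
  obtain j where j: "j < length y" "y ! j" "ph y j = int i" "ph y (Suc j) = int i + 1"
    "\<forall>k\<le>j. ph y k < int i + 1"
    using first_visit[of "int i + 1" y t] t by auto
  define x where "x = y[j := False]"
  have phx: "ph x k = ph y k - (if j < k then 2 else 0)" for k
    unfolding x_def using j by (simp add: ph_setF)
  have tj: "j < t"
  proof (rule ccontr)
    assume "\<not> j < t" hence "t \<le> j" by simp
    thus False using j(5)[rule_format, of t] t(2) by linarith
  qed
  have P: "P1a i x j" unfolding P1a_def
  proof (intro conjI)
    show "j < length x" "\<not> x ! j" using j by (simp_all add: x_def)
    show "ph x j = int i" using j by (simp add: phx)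
    show "\<forall>k. ph x k \<le> int i"
    proof
      fix k show "ph x k \<le> int i" using j(5)[rule_format, of k] le[rule_format, of k] by (simp add: phx) 
    qed
    show "\<exists>t. j < t \<and> t \<le> length x \<and> ph x t = int i \<and> (\<forall>k. j < k \<longrightarrow> k \<le> length x \<longrightarrow> ph x k = int i \<longrightarrow> k = t)"
    proof (intro exI[of _ t] conjI allI impI)
      show "j < t" "t \<le> length x" using tj t by (simp_all add: x_def)
      show "ph x t = int i" using tj t by (simp add: phx)
      fix k assume k: "j < k" "k \<le> length x" "ph x k = int i"
      have "ph y k = int i + 2" using k(1,3) by (simp add: phx)
      moreover have "k \<le> length y" using k(2) by (simp add: x_def)
      ultimately show "k = t" using notTW[OF ntw, of k t] t by simp
    qed
  qed
  have "x \<in> Cplus n h i" unfolding Cplus_iff C_iff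
  proof (intro conjI)
    show "length x = n" using len by (simp add: x_def)
    show "i \<le> h" using ih by simp
    show "\<forall>k. ph x k \<le> int i" using P by (simp add: P1a_def)
    show "\<exists>k. ph x k = int i" using P unfolding P1a_def by blast
    show "height x = 2 * int i - int h" using hy j by (simp add: x_def height_upd)
    have "ph x t = int i" "ph x j = int i" using t(2) tj j(3) by (simp_all add: phx)
    moreover have "t \<le> length x" using t(1) by (simp add: x_def)
    ultimately show "TW x (int i)" using TW_intro[of j t x "int i"] tj by simp
  qed
  moreover have "x[j := True] = y" using j(2) list_update_id[of y j] by (simp add: x_def)
  ultimately show "\<exists>x j. x \<in> Cplus n h i \<and> P1a i x j \<and> x[j := True] = y" using P by blast
next
  fix x1 x2 j1 j2 assume "P1a i x1 j1" "P1a i x2 j2" "x1[j1 := True] = x2[j2 := True]"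
  thus "x1 = x2" unfolding P1a_def using inj_first[of j1 x1 j2 x2 "int i"] by blast
qed



definition P1b :: "nat \<Rightarrow> bool list \<Rightarrow> nat \<Rightarrow> bool" where
  "P1b i x j \<longleftrightarrow> j < length x \<and> \<not> x ! j \<and> ph x j = int i - 1 \<and> (\<forall>k. j < k \<longrightarrow> ph x k < int i - 1)"

lemma iib_t:
  assumes x: "x \<in> Cminus n (h + 2) i" and P: "P1b i x j"
  shows "\<exists>t. t < j \<and> ph x t = int i \<and> \<not> x ! t"
proof -
  have le: "\<forall>k. ph x k \<le> int i" and ex: "\<exists>k. ph x k = int i" using x by (simp_all add: Cminus_iff C_iff)
  have j: "j < length x" "ph x j = int i - 1" "\<forall>k. j < k \<longrightarrow> ph x k < int i - 1" using P by (simp_all add: P1b_def)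
  obtain t where t: "ph x t = int i" using ex by blast
  have "t \<noteq> j" using t j(2) by auto
  moreover have "\<not> j < t" using j(3) t by fastforce
  ultimately have tj: "t < j" by simp
  have "ph x (Suc t) = int i + stp (x ! t)" using ph_Suc[of t x] tj j(1) t by simp
  hence "\<not> x ! t" using le[rule_format, of "Suc t"] by (auto simp: stp_def split: if_splits)
  thus ?thesis using tj t by blast
qed

lemma iib_inj_lt:
  assumes x1: "x1 \<in> Cminus n (h + 2) i" and x2: "x2 \<in> Cminus n (h + 2) i"
    and P1: "P1b i x1 j1" and P2: "P1b i x2 j2" and eq: "x1[j1 := True] = x2[j2 := True]" and lt: "j1 < j2"
  shows False
proof -
  obtain t1 where t1: "t1 < j1" "ph x1 t1 = int i" using iib_t[OF x1 P1] by blast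
  have j1: "j1 < length x1" "\<not> x1 ! j1" "ph x1 j1 = int i - 1" using P1 by (simp_all add: P1b_def)
  have j2: "j2 < length x2" "\<not> x2 ! j2" using P2 by (simp_all add: P1b_def)
  have ntw: "\<not> TW x2 (int i)" using x2 by (simp add: Cminus_iff)
  have "ph (x1[j1 := True]) t1 = int i" using t1 j1(1,2) by (simp add: ph_setT)
  hence a: "ph x2 t1 = int i" using eq j2(1,2) t1 lt by (simp add: ph_setT)
  have "ph x1 (Suc j1) = int i - 2" using ph_Suc[OF j1(1)] j1(2,3) by simp
  hence "ph (x1[j1 := True]) (Suc j1) = int i" using j1(1,2) by (simp add: ph_setT)
  hence b: "ph x2 (Suc j1) = int i" using eq j2(1,2) lt by (simp add: ph_setT)
  have "TW x2 (int i)" using TW_intro[of t1 "Suc j1" x2 "int i"] a b t1 lt j2(1) by simp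
  thus False using ntw by simp
qed

lemma case_iib:
  assumes ih: "i \<le> h"
  shows "perfect_matching_between (edges_between (Mlex n 1) (Cminus n (h + 2) i) (Cplus n h i))
     (Cminus n (h + 2) i) (Cplus n h i)"
proof (rule mlex_pm[where P = "P1b i" and c = "2 * int i - int (h + 2)"])
  fix x assume "x \<in> Cminus n (h + 2) i"
  thus "length x = n" "height x = 2 * int i - int (h + 2)" by (simp_all add: Cminus_iff C_iff)
next
  fix y assume "y \<in> Cplus n h i"
  thus "height y = 2 * int i - int (h + 2) + 2" by (simp add: Cplus_iff C_iff)
next
  fix x assume x: "x \<in> Cminus n (h + 2) i"
  hence le: "\<forall>k. ph x k \<le> int i" and ex: "\<exists>k. ph x k = int i" and ntw: "\<not> TW x (int i)"
    and hx: "height x = 2 * int i - int (h + 2)"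
    by (simp_all add: Cminus_iff C_iff)
  obtain t where t: "t \<le> length x" "ph x t = int i" using ex visit_le by blast
  have tn: "t < length x"
  proof (rule ccontr)
    assume "\<not> t < length x" hence "t = length x" using t(1) by simp
    thus False using t(2) hx ih by simp
  qed
  have "ph x (Suc t) = int i + stp (x ! t)" using ph_Suc[OF tn] t(2) by simp
  hence st: "ph x (Suc t) = int i - 1" using le[rule_format, of "Suc t"] by (auto simp: stp_def split: if_splits)
  have stn: "Suc t < length x"
  proof (rule ccontr)
    assume "\<not> Suc t < length x" hence "Suc t = length x" using tn by simp
    thus False using st hx ih by simp
  qed
  obtain j where j: "ph x j = int i - 1" "j < length x" "\<forall>k'. j < k' \<and> k' < length x \<longrightarrow> ph x k' \<noteq> int i - 1"
    using ex_last[of "\<lambda>k. ph x k = int i - 1", OF st stn] by blast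
  have tj: "Suc t \<le> j"
  proof (rule ccontr)
    assume "\<not> Suc t \<le> j" hence "j < Suc t" by simp
    thus False using j(3) stn st by blast
  qed
  have after: "ph x k < int i - 1" if k: "j < k" for k
  proof (cases "k < length x")
    case True
    have "ph x k \<noteq> int i - 1" using j(3) k True by blast
    moreover have "ph x k \<noteq> int i"
    proof
      assume "ph x k = int i"
      hence "k = t" using notTW[OF ntw, of k t] True t by simp
      thus False using k tj by simp
    qed
    ultimately show ?thesis using le[rule_format, of k] by simp
  next
    case False thus ?thesis using ph_ge[of x k] hx ih by simp
  qed
  have "ph x (Suc j) = int i - 1 + stp (x ! j)" using ph_Suc[OF j(2)] j(1) by simp
  hence "\<not> x ! j" using after[of "Suc j"] by (auto simp: stp_def split: if_splits)
  hence "P1b i x j" unfolding P1b_def using j(1,2) after by blast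
  thus "\<exists>j. P1b i x j" by blast
next
  fix x j assume x: "x \<in> Cminus n (h + 2) i" and P: "P1b i x j"
  hence le: "\<forall>k. ph x k \<le> int i" and ntw: "\<not> TW x (int i)"
    and hx: "height x = 2 * int i - int (h + 2)" and len: "length x = n"
    by (simp_all add: Cminus_iff C_iff)
  have j: "j < length x" "\<not> x ! j" "ph x j = int i - 1" using P by (simp_all add: P1b_def)
  have after: "\<forall>k. j < k \<longrightarrow> ph x k < int i - 1" using P by (simp add: P1b_def)
  obtain t where t: "t < j" "ph x t = int i" "\<not> x ! t" using iib_t[OF x P] by blast
  have tn: "t < length x" using t(1) j(1) by simp
  have hxi: "height x \<le> int i - 2" using hx ih by simp
  have "mcond 1 x j" unfolding mcond_def
  proof (intro conjI)
    show "j < length x" "j \<in> downs (dpath x)" using j by (simp_all add: down_dpath)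
    have hj: "ph (dpath x) j = int i - 1" using j by (simp add: ph_dpath_le)
    have tD: "t \<in> downs (dpath x)" using tn t(3) by (simp add: down_dpath)
    moreover have "scan_before (dpath x) t j" using tn t(2) hj by (simp add: sb_ph ph_dpath_le)
    moreover have "\<forall>j'. j' \<in> downs (dpath x) \<longrightarrow> scan_before (dpath x) j' j \<longrightarrow> j' = t"
    proof (intro allI impI)
      fix j' assume j'a: "j' \<in> downs (dpath x)" and j'b: "scan_before (dpath x) j' j"
      have j'l: "j' \<le> length (dpath x)" using j'a by (simp add: downs_iff)
      show "j' = t"
      proof (cases "j' \<le> length x")
        case True
        have hd: "ph (dpath x) j' = ph x j'" using True by (simp add: ph_dpath_le)
        have "ph x j' > int i - 1 \<or> (ph x j' = int i - 1 \<and> j < j')" using j'b hj hd by (simp add: sb_ph)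
        moreover have "\<not> (ph x j' = int i - 1 \<and> j < j')" using after by fastforce
        ultimately have "ph x j' = int i" using le[rule_format, of j'] by simp
        thus ?thesis using notTW[OF ntw, of j' t] True tn t(2) by simp
      next
        case False
        hence "ph (dpath x) j' < height x" using ph_dpath_gt[of x j'] j'l by simp
        thus ?thesis using j'b hj hxi by (simp add: sb_ph)
      qed
    qed
    ultimately show "card {j' \<in> downs (dpath x). scan_before (dpath x) j' j} = 1"
      by (rule card_sb_1)
  qed
  moreover have "x[j := True] \<in> Cplus n h i"
    unfolding Cplus_iff C_iff
  proof (intro conjI)
    show "length (x[j := True]) = n" using len by simp
    show "i \<le> h" using ih by simp
    show "\<forall>k. ph (x[j := True]) k \<le> int i"
    proof
      fix k show "ph (x[j := True]) k \<le> int i"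
        using j(1,2) le[rule_format, of k] after[rule_format, of k] by (auto simp: ph_setT)
    qed
    have "ph (x[j := True]) t = int i" using j(1,2) t by (simp add: ph_setT)
    thus "\<exists>k. ph (x[j := True]) k = int i" by blast
    show "height (x[j := True]) = 2 * int i - int h" using j hx by (simp add: height_set_true)
    have "ph x (Suc j) = int i - 2" using ph_Suc[OF j(1)] j(2,3) by simp
    hence "ph (x[j := True]) (Suc j) = int i" using j(1,2) by (simp add: ph_setT)
    moreover have "ph (x[j := True]) t = int i" using j(1,2) t by (simp add: ph_setT)
    ultimately show "TW (x[j := True]) (int i)" using TW_intro[of t "Suc j" "x[j := True]" "int i"] t(1) j(1) by simp
  qed
  ultimately show "mcond 1 x j \<and> x[j := True] \<in> Cplus n h i" by simp
next
  fix y assume y: "y \<in> Cplus n h i"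
  hence le: "\<forall>k. ph y k \<le> int i" and hy: "height y = 2 * int i - int h" and len: "length y = n"
    and tw: "TW y (int i)"
    by (simp_all add: Cplus_iff C_iff)
  obtain k1 k2 where kk: "k1 < k2" "k2 \<le> length y" "ph y k1 = int i" "ph y k2 = int i"
    using tw unfolding TW_def by blast
  obtain t where t: "ph y t = int i" "t \<le> k1" "\<forall>k'. k' < t \<longrightarrow> ph y k' \<noteq> int i"
    using ex_first[of "\<lambda>k. ph y k = int i", OF kk(3)] by blast
  have "t < k2 \<and> ph y k2 = int i" using kk t by simp
  then obtain s where s: "t < s" "ph y s = int i" "s \<le> k2" "\<forall>k'. k' < s \<longrightarrow> \<not> (t < k' \<and> ph y k' = int i)"
    using ex_first[of "\<lambda>k. t < k \<and> ph y k = int i" k2] by blast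
  define j where "j = s - 1"
  have sj: "s = Suc j" using s(1) by (simp add: j_def)
  have jn: "j < length y" using sj s(3) kk(2) by simp
  have tj: "t < j"
  proof (rule ccontr)
    assume "\<not> t < j" hence "j = t" using s(1) sj by simp
    hence "ph y s = int i + stp (y ! t)" using ph_Suc[of t y] jn sj t(1) by simp
    thus False using s(2) by (simp add: stp_def split: if_splits)
  qed
  have "ph y j \<noteq> int i" using s(4) tj sj by simp
  hence "ph y j < int i" using le[rule_format, of j] by simp
  moreover have "ph y s = ph y j + stp (y ! j)" using ph_Suc[OF jn] sj by simp
  ultimately have yj: "y ! j" and hj: "ph y j = int i - 1" using s(2) by (auto simp: stp_def split: if_splits)
  define x where "x = y[j := False]"
  have phx: "ph x k = ph y k - (if j < k then 2 else 0)" for k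
    unfolding x_def using jn yj by (simp add: ph_setF)
  have P: "P1b i x j" unfolding P1b_def
  proof (intro conjI allI impI)
    show "j < length x" "\<not> x ! j" using jn by (simp_all add: x_def)
    show "ph x j = int i - 1" using hj by (simp add: phx)
    fix k assume "j < k" thus "ph x k < int i - 1" using le[rule_format, of k] by (simp add: phx)
  qed
  have lex: "ph x k \<le> int i" for k using le[rule_format, of k] by (simp add: phx)
  have "x \<in> Cminus n (h + 2) i" unfolding Cminus_iff C_iff
  proof (intro conjI)
    show "length x = n" using len by (simp add: x_def)
    show "i \<le> h + 2" using ih by simp
    show "\<forall>k. ph x k \<le> int i" using lex by blast
    have "ph x t = int i" using tj t(1) by (simp add: phx)
    thus "\<exists>k. ph x k = int i" by blast
    show "height x = 2 * int i - int (h + 2)" using hy jn yj by (simp add: x_def height_upd)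
    have vis: "k = t" if k: "ph x k = int i" for k
    proof -
      have kj: "\<not> j < k" using k le[rule_format, of k] by (auto simp: phx)
      hence yk: "ph y k = int i" using k by (simp add: phx)
      have "\<not> k < t" using t(3) yk by blast
      moreover have "\<not> t < k" using s(4) yk kj sj by auto
      ultimately show "k = t" by simp
    qed
    show "\<not> TW x (int i)"
    proof
      assume "TW x (int i)"
      then obtain a b where "a < b" "ph x a = int i" "ph x b = int i" unfolding TW_def by blast
      thus False using vis[of a] vis[of b] by simp
    qed
  qed
  moreover have "x[j := True] = y" using yj list_update_id[of y j] by (simp add: x_def)
  ultimately show "\<exists>x j. x \<in> Cminus n (h + 2) i \<and> P1b i x j \<and> x[j := True] = y" using P by blast
next
  fix x1 x2 j1 j2 assume x1: "x1 \<in> Cminus n (h + 2) i" and x2: "x2 \<in> Cminus n (h + 2) i"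
    and P1: "P1b i x1 j1" and P2: "P1b i x2 j2" and eq: "x1[j1 := True] = x2[j2 := True]"
  have "j1 = j2"
    using iib_inj_lt[OF x1 x2 P1 P2 eq] iib_inj_lt[OF x2 x1 P2 P1 eq[symmetric]] by (metis linorder_neqE_nat)
  moreover have "\<not> x1 ! j1" "\<not> x2 ! j2" using P1 P2 by (simp_all add: P1b_def)
  ultimately show "x1 = x2" using eq upd_back by metis
qed



definition P0b :: "bool list \<Rightarrow> nat \<Rightarrow> bool" where
  "P0b x j \<longleftrightarrow> j < length x \<and> \<not> x ! j \<and> ph x j = -1 \<and> (\<forall>k. j < k \<longrightarrow> k < length x \<longrightarrow> ph x k < -1)"

lemma L0_facts:
  assumes "x \<in> Cminus n 1 0"
  shows "length x = n" "height x = -1" "\<forall>k. ph x k \<le> 0" "\<And>k::nat. 0 < k \<Longrightarrow> ph x k < 0"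
proof -
  have le: "\<forall>k. ph x k \<le> 0" and ntw: "\<not> TW x 0" and hx: "height x = -1" and len: "length x = n"
    using assms by (simp_all add: Cminus_iff C_iff)
  show "length x = n" "height x = -1" "\<forall>k. ph x k \<le> 0" using len hx le by simp_all
  fix k :: nat assume k: "0 < k"
  show "ph x k < 0"
  proof (cases "k \<le> length x")
    case True
    have "ph x k \<noteq> 0"
    proof
      assume "ph x k = 0" thus False using notTW[OF ntw, of k 0] True k by simp
    qed
    thus ?thesis using le[rule_format, of k] by simp
  next
    case False thus ?thesis using ph_ge[of x k] hx by simp
  qed
qed

lemma U1_facts:
  assumes "y \<in> Cminus n 1 1"
  shows "length y = n" "height y = 1" "\<forall>k. ph y k \<le> 1" "\<And>k::nat. k < length y \<Longrightarrow> ph y k \<le> 0"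
proof -
  have le: "\<forall>k. ph y k \<le> 1" and ntw: "\<not> TW y 1" and hy: "height y = 1" and len: "length y = n"
    using assms by (simp_all add: Cminus_iff C_iff)
  show "length y = n" "height y = 1" "\<forall>k. ph y k \<le> 1" using len hy le by simp_all
  fix k :: nat assume k: "k < length y"
  have "ph y k \<noteq> 1"
  proof
    assume "ph y k = 1" thus False using notTW[OF ntw, of k "length y"] k hy by simp
  qed
  thus "ph y k \<le> 0" using le[rule_format, of k] by simp
qed

lemma case_ii0:
  assumes n3: "n \<ge> 3"
  shows "perfect_matching_between (edges_between (Mlex n 1) (Cminus n 1 0) (Cminus n 1 1))
     (Cminus n 1 0) (Cminus n 1 1)"
proof (rule mlex_pm[where P = "P0b" and c = "-1"])
  fix x assume "x \<in> Cminus n 1 0"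
  thus "length x = n" "height x = -1" using L0_facts by simp_all
next
  fix y assume "y \<in> Cminus n 1 1"
  thus "height y = -1 + 2" using U1_facts by simp
next
  fix x assume x: "x \<in> Cminus n 1 0"
  note F = L0_facts[OF x]
  have n1: "1 < length x" using F(1) n3 by simp
  have n0: "0 < length x" using n1 by linarith
  have "ph x 1 = stp (x ! 0)" using ph_Suc[OF n0] by simp
  hence p1: "ph x 1 = -1" using F(4)[of 1] by (auto simp: stp_def split: if_splits)
  obtain j where j: "ph x j = -1" "j < length x" "\<forall>k'. j < k' \<and> k' < length x \<longrightarrow> ph x k' \<noteq> -1"
    using ex_last[of "\<lambda>k. ph x k = -1", OF p1 n1] by blast
  have after: "\<forall>k. j < k \<longrightarrow> k < length x \<longrightarrow> ph x k < -1"
  proof (intro allI impI)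
    fix k assume "j < k" "k < length x"
    thus "ph x k < -1" using j(3) F(4)[of k] by fastforce
  qed
  have "ph x (Suc j) = -1 + stp (x ! j)" using ph_Suc[OF j(2)] j(1) by simp
  hence "\<not> x ! j" using F(4)[of "Suc j"] by (auto simp: stp_def split: if_splits)
  hence "P0b x j" unfolding P0b_def using j(1,2) after by blast
  thus "\<exists>j. P0b x j" by blast
next
  fix x j assume x: "x \<in> Cminus n 1 0" and P: "P0b x j"
  note F = L0_facts[OF x]
  have j: "j < length x" "\<not> x ! j" "ph x j = -1" using P by (simp_all add: P0b_def)
  have after: "\<forall>k. j < k \<longrightarrow> k < length x \<longrightarrow> ph x k < -1" using P by (simp add: P0b_def)
  have dp: "dpath x = x" using F(2) by (simp add: dpath_cases)
  have n1: "1 < length x" using F(1) n3 by simp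
  have n0: "0 < length x" using n1 by linarith
  have "ph x 1 = stp (x ! 0)" using ph_Suc[OF n0] by simp
  hence x0: "\<not> x ! 0" using F(4)[of 1] by (auto simp: stp_def split: if_splits)
  have "mcond 1 x j" unfolding mcond_def dp
  proof (intro conjI)
    show "j < length x" "j \<in> downs x" using j by (simp_all add: downs_iff)
    have tD: "0 \<in> downs x" using x0 n1 by (cases x) (auto simp: downs_iff)
    moreover have "scan_before x 0 j" using j(3) by (simp add: sb_ph)
    moreover have "\<forall>j'. j' \<in> downs x \<longrightarrow> scan_before x j' j \<longrightarrow> j' = 0"
    proof (intro allI impI)
      fix j' assume j'a: "j' \<in> downs x" and j'b: "scan_before x j' j"
      have j'l: "j' < length x" using j'a by (simp add: downs_iff)
      have "ph x j' > -1 \<or> (ph x j' = -1 \<and> j < j')" using j'b j(3) by (simp add: sb_ph)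
      moreover have "\<not> (ph x j' = -1 \<and> j < j')" using after j'l by fastforce
      ultimately have "ph x j' \<ge> 0" by simp
      thus "j' = 0" using F(4)[of j'] by (cases "j' = 0") simp_all
    qed
    ultimately show "card {j' \<in> downs x. scan_before x j' j} = 1"
      using card_sb_1[of 0 x j] dp by simp
  qed
  moreover have "x[j := True] \<in> Cminus n 1 1"
    unfolding Cminus_iff C_iff
  proof (intro conjI)
    have phy: "ph (x[j := True]) k = ph x k + (if j < k then 2 else 0)" for k using j(1,2) by (simp add: ph_setT)
    have low: "ph (x[j := True]) k \<le> 0" if "k < length x" for k
    proof (cases "j < k")
      case True thus ?thesis using after[rule_format, of k] that by (simp add: phy)
    next
      case False thus ?thesis using F(3)[rule_format, of k] by (simp add: phy)
    qed
    show "length (x[j := True]) = n" using F(1) by simp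
    show "1 \<le> (1::nat)" by simp
    show "\<forall>k. ph (x[j := True]) k \<le> int 1"
    proof
      fix k show "ph (x[j := True]) k \<le> int 1"
      proof (cases "j < k")
        case True
        have "ph x k < 0" using F(4)[of k] True by simp
        thus ?thesis using True by (simp add: phy)
      next
        case False thus ?thesis using F(3)[rule_format, of k] by (simp add: phy)
      qed
    qed
    have hy: "height (x[j := True]) = 1" using j F(2) by (simp add: height_set_true)
    thus "\<exists>k. ph (x[j := True]) k = int 1" using ph_len[of "x[j := True]"] by (metis of_nat_1)
    show "height (x[j := True]) = 2 * int 1 - int 1" using hy by simp
    show "\<not> TW (x[j := True]) (int 1)"
    proof
      assume "TW (x[j := True]) (int 1)"
      then obtain a b where ab: "a < b" "b \<le> length x" "ph (x[j := True]) a = 1" unfolding TW_def by auto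
      thus False using low[of a] by simp
    qed
  qed
  ultimately show "mcond 1 x j \<and> x[j := True] \<in> Cminus n 1 1" by simp
next
  fix y assume y: "y \<in> Cminus n 1 1"
  note F = U1_facts[OF y]
  have n1: "1 < length y" using F(1) n3 by simp
  have n0: "0 < length y" using n1 by linarith
  have "ph y 1 = stp (y ! 0)" using ph_Suc[OF n0] by simp
  hence p1: "ph y 1 = -1" using F(4)[of 1] n1 by (auto simp: stp_def split: if_splits)
  have "ph (drop 1 y) (length y - 1) = ph y (1 + (length y - 1)) - ph y 1"
    using n1 by (simp add: ph_drop)
  moreover have "1 + (length y - 1) = length y" using n1 by simp
  ultimately have "ph (drop 1 y) (length y - 1) = ph y (length y) - ph y 1" by simp
  hence "ph (drop 1 y) (length y - 1) \<ge> 1" using p1 F(2) by simp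
  then obtain l where l: "l \<le> length y - 1" "ph (drop 1 y) l = 1" using ivt[of 1 "drop 1 y" "length y - 1"] by auto
  hence "ph y (1 + l) = 0" using n1 p1 by (simp add: ph_drop)
  hence "1 \<le> 1 + l \<and> ph y (1 + l) = 0" by simp
  then obtain s where s: "1 \<le> s" "ph y s = 0" "s \<le> 1 + l" "\<forall>k'. k' < s \<longrightarrow> \<not> (1 \<le> k' \<and> ph y k' = 0)"
    using ex_first[of "\<lambda>k. 1 \<le> k \<and> ph y k = 0" "1 + l"] by blast
  have sn: "s < length y"
  proof -
    have "s \<le> length y" using s(3) l(1) n1 by simp
    moreover have "s \<noteq> length y" using s(2) F(2) ph_len[of y] by auto
    ultimately show ?thesis by simp
  qed
  have s1: "s \<noteq> 1" using s(2) p1 by auto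
  define j where "j = s - 1"
  have sj: "s = Suc j" "1 \<le> j" using s(1) s1 by (auto simp: j_def)
  have jn: "j < length y" using sj sn by simp
  have neg: "ph y k \<le> -1" if "1 \<le> k" "k < s" for k
  proof -
    have "ph y k \<noteq> 0" using s(4) that by blast
    moreover have "ph y k \<le> 0" using F(4)[of k] that sn by simp
    ultimately show ?thesis by simp
  qed
  have "ph y s = ph y j + stp (y ! j)" using ph_Suc[OF jn] sj by simp
  moreover have "ph y j \<le> -1" using neg[of j] sj by simp
  ultimately have yj: "y ! j" and hj: "ph y j = -1" using s(2) by (auto simp: stp_def split: if_splits)
  define x where "x = y[j := False]"
  have phx: "ph x k = ph y k - (if j < k then 2 else 0)" for k
    unfolding x_def using jn yj by (simp add: ph_setF)
  have lx: "length x = length y" by (simp add: x_def)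
  have P: "P0b x j" unfolding P0b_def
  proof (intro conjI allI impI)
    show "j < length x" "\<not> x ! j" using jn by (simp_all add: x_def)
    show "ph x j = -1" using hj by (simp add: phx)
    fix k assume "j < k" "k < length x" thus "ph x k < -1" using F(4)[of k] by (simp add: phx lx)
  qed
  have negx: "ph x k \<le> -1" if "1 \<le> k" for k
  proof (cases "j < k")
    case True thus ?thesis using F(3)[rule_format, of k] by (simp add: phx)
  next
    case False thus ?thesis using neg[of k] that sj by (simp add: phx)
  qed
  have "x \<in> Cminus n 1 0" unfolding Cminus_iff C_iff
  proof (intro conjI)
    show "length x = n" using F(1) by (simp add: x_def)
    show "0 \<le> (1::nat)" by simp
    show "\<forall>k. ph x k \<le> int 0"
    proof
      fix k show "ph x k \<le> int 0" using negx[of k] by (cases k) auto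
    qed
    show "\<exists>k. ph x k = int 0" by (intro exI[of _ 0]) simp
    show "height x = 2 * int 0 - int 1" using F(2) jn yj by (simp add: x_def height_upd)
    show "\<not> TW x (int 0)"
    proof
      assume "TW x (int 0)"
      then obtain a b where "a < b" "ph x b = 0" unfolding TW_def by auto
      thus False using negx[of b] by simp
    qed
  qed
  moreover have "x[j := True] = y" using yj list_update_id[of y j] by (simp add: x_def)
  ultimately show "\<exists>x j. x \<in> Cminus n 1 0 \<and> P0b x j \<and> x[j := True] = y" using P by blast
next
  fix x1 x2 j1 j2 assume x1: "x1 \<in> Cminus n 1 0" and x2: "x2 \<in> Cminus n 1 0"
    and P1: "P0b x1 j1" and P2: "P0b x2 j2" and eq: "x1[j1 := True] = x2[j2 := True]"
  have j1: "j1 < length x1" "\<not> x1 ! j1" "ph x1 j1 = -1" using P1 by (simp_all add: P0b_def)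
  have j2: "j2 < length x2" "\<not> x2 ! j2" "ph x2 j2 = -1" using P2 by (simp_all add: P0b_def)
  have lt: False if "P0b a ja" "P0b b jb" "a \<in> Cminus n 1 0" "b \<in> Cminus n 1 0"
    "a[ja := True] = b[jb := True]" "ja < jb" for a b ja jb
  proof -
    have ja: "ja < length a" "\<not> a ! ja" "ph a ja = -1" using that(1) by (simp_all add: P0b_def)
    have jb: "jb < length b" "\<not> b ! jb" using that(2) by (simp_all add: P0b_def)
    have "ph a (Suc ja) = -2" using ph_Suc[OF ja(1)] ja(2,3) by simp
    hence "ph (a[ja := True]) (Suc ja) = 0" using ja(1,2) by (simp add: ph_setT)
    moreover have "ph (b[jb := True]) (Suc ja) = ph b (Suc ja)" using jb that(6) by (simp add: ph_setT)
    moreover have "ph b (Suc ja) < 0" using L0_facts(4)[OF that(4), of "Suc ja"] by simp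
    ultimately show False using that(5) by simp
  qed
  have "j1 = j2" using lt[OF P1 P2 x1 x2 eq] lt[OF P2 P1 x2 x1 eq[symmetric]] by (metis linorder_neqE_nat)
  thus "x1 = x2" using eq upd_back j1(2) j2(2) by metis
qed



lemma Dyck_wrap:
  assumes a: "a \<in> Dyck" and b: "b \<in> Dyck" shows "False # a @ True # b \<in> Dyck"
proof -
  have ha: "height a = 0" and hb: "height b = 0" using a b by (simp_all add: Dyck_h)
  have "ph (False # a @ True # b) k \<le> 0" for k
  proof (cases k)
    case 0 thus ?thesis by simp
  next
    case (Suc m)
    have "ph (a @ True # b) m \<le> 1" using Dyck_le[OF a, of m] Dyck_le[OF b, of "m - length a - 1"] ha
      by (simp add: ph_sep)
    thus ?thesis using Suc by (simp add: ph_Cons)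
  qed
  moreover have "height (False # a @ True # b) = 0" using ha hb by simp
  ultimately show ?thesis by (simp add: Dyck_iff)
qed

lemma Dyck_decomp:
  assumes u: "u \<in> Dyck" and ne: "u \<noteq> []"
  shows "\<exists>a b. a \<in> Dyck \<and> b \<in> Dyck \<and> u = False # a @ True # b"
proof -
  obtain c u' where cu: "u = c # u'" using ne by (cases u) auto
  have hu: "height u = 0" and lu: "\<forall>k. ph u k \<le> 0" using u by (simp_all add: Dyck_iff)
  have "ph u 1 = stp c" using cu by (simp add: ph_Cons)
  hence c: "\<not> c" using lu[rule_format, of 1] by (auto simp: stp_def)
  have phu': "ph u' k = ph u (Suc k) + 1" for k using cu c by (simp add: ph_Cons)
  have hu': "height u' = 1" using hu cu c by simp
  obtain a r where ar: "u' = a @ True # r" "a \<in> Dyck" using split_first[of u' "length u'"] hu' by auto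
  have ha: "height a = 0" using ar(2) by (simp add: Dyck_h)
  have "ph r l \<le> 0" for l
  proof -
    have "ph u' (length a + 1 + l) = 1 + ph r l" using ar(1) ha by (simp add: ph_sep)
    thus ?thesis using phu'[of "length a + 1 + l"] lu by (smt (verit))
  qed
  moreover have "height r = 0" using hu' ar(1) ha by simp
  ultimately have "r \<in> Dyck" by (simp add: Dyck_iff)
  thus ?thesis using ar cu c by blast
qed

lemma rot_eq:
  assumes a: "a \<in> Dyck" and b: "b \<in> Dyck"
  shows "rot (False # a @ True # b) = a @ False # b @ [True]"
proof -
  have "(THE w. \<exists>u v. u \<in> Dyck \<and> v \<in> Dyck \<and> False # a @ True # b = False # u @ True # v \<and>
                   w = u @ False # v @ [True]) = a @ False # b @ [True]"
  proof (rule the_equality)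
    show "\<exists>u v. u \<in> Dyck \<and> v \<in> Dyck \<and> False # a @ True # b = False # u @ True # v \<and>
                   a @ False # b @ [True] = u @ False # v @ [True]" using a b by blast
  next
    fix w assume "\<exists>u v. u \<in> Dyck \<and> v \<in> Dyck \<and> False # a @ True # b = False # u @ True # v \<and>
                   w = u @ False # v @ [True]"
    then obtain u v where uv: "u \<in> Dyck" "v \<in> Dyck" "a @ True # b = u @ True # v" "w = u @ False # v @ [True]"
      by auto
    have "a = u \<and> b = v" using core[OF a uv(1) uv(3)] by simp
    thus "w = a @ False # b @ [True]" using uv(4) by simp
  qed
  thus ?thesis by (simp add: rot_def)
qed

lemma rot_Nil[simp]: "rot [] = []" by (simp add: rot_def)

lemma rot_props:
  assumes u: "u \<in> Dyck" shows "rot u \<in> Dyck \<and> length (rot u) = length u"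
proof (cases "u = []")
  case True thus ?thesis by simp
next
  case False
  then obtain a b where ab: "a \<in> Dyck" "b \<in> Dyck" "u = False # a @ True # b"
    using Dyck_decomp[OF u] by blast
  have r: "rot u = a @ False # b @ [True]" using rot_eq[OF ab(1,2)] ab(3) by simp
  have ha: "height a = 0" and hb: "height b = 0" using ab by (simp_all add: Dyck_h)
  have "ph (a @ False # b @ [True]) k \<le> 0" for k
  proof -
    have pT: "ph [True] j \<le> 1" for j by (cases j) (auto simp: ph_def)
    have "ph (b @ [True]) m \<le> 1" for m using Dyck_le[OF ab(2), of m] hb pT[of "m - length b"]
      by (simp add: ph_append)
    thus ?thesis using Dyck_le[OF ab(1), of k] ha by (simp add: ph_sep)
  qed
  moreover have "height (a @ False # b @ [True]) = 0" using ha hb by simp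
  ultimately have "rot u \<in> Dyck" using r by (simp add: Dyck_iff)
  thus ?thesis using r ab(3) by simp
qed

lemma rot_inj:
  assumes u1: "u1 \<in> Dyck" and u2: "u2 \<in> Dyck" and eq: "rot u1 = rot u2"
  shows "u1 = u2"
proof (cases "u1 = [] \<or> u2 = []")
  case True
  thus ?thesis using rot_props[OF u1] rot_props[OF u2] eq by (metis length_0_conv rot_Nil)
next
  case False
  obtain a1 b1 where ab1: "a1 \<in> Dyck" "b1 \<in> Dyck" "u1 = False # a1 @ True # b1"
    using Dyck_decomp[OF u1] False by blast
  obtain a2 b2 where ab2: "a2 \<in> Dyck" "b2 \<in> Dyck" "u2 = False # a2 @ True # b2"
    using Dyck_decomp[OF u2] False by blast
  have "(a1 @ False # b1) @ [True] = (a2 @ False # b2) @ [True]"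
    using eq rot_eq[OF ab1(1,2)] rot_eq[OF ab2(1,2)] ab1(3) ab2(3) by simp
  hence e: "a1 @ False # b1 = a2 @ False # b2" by simp
  have "a1 = a2 \<and> b1 = b2" using core[OF ab1(1) ab2(1) e] Dyck_le[OF ab1(2)] Dyck_le[OF ab2(2)] by blast
  thus ?thesis using ab1(3) ab2(3) by simp
qed

lemma rot_surj:
  assumes w: "w \<in> Dyck" shows "\<exists>u \<in> Dyck. rot u = w"
proof (cases "w = []")
  case True thus ?thesis by (intro bexI[of _ "[]"]) simp_all
next
  case False
  define w' where "w' = butlast w"
  have wd: "w = w' @ [last w]" using False by (simp add: w'_def)
  have hw: "height w = 0" and lw: "\<forall>k. ph w k \<le> 0" using w by (simp_all add: Dyck_iff)
  have "ph w (length w') = height w'" by (subst wd) (simp add: ph_append)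
  hence hw'le: "height w' \<le> 0" using lw by metis
  have "height w = height w' + stp (last w)" by (subst wd) simp
  hence lt: "last w" and hw': "height w' = -1" using hw hw'le by (auto simp: stp_def split: if_splits)
  have lw': "\<forall>k. ph w' k \<le> 0"
  proof
    fix k
    have "ph w (min k (length w')) = ph w' (min k (length w'))" by (subst wd) (simp add: ph_append)
    moreover have "ph w' k = ph w' (min k (length w'))" by (simp add: ph_def min_def)
    ultimately show "ph w' k \<le> 0" using lw by metis
  qed
  obtain a r where ar: "w' = a @ False # r" "a \<in> Dyck" "\<forall>k. ph r k \<le> 0" "height r = height w' + 1"
    using split_last[OF lw'] hw' by auto
  have r: "r \<in> Dyck" using ar(3,4) hw' by (simp add: Dyck_iff)
  have "rot (False # a @ True # r) = w" using rot_eq[OF ar(2) r] wd ar(1) lt by simp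
  thus ?thesis using Dyck_wrap[OF ar(2) r] by blast
qed

lemma hyp_adj_Cons: assumes "hyp_adj s t" shows "hyp_adj (c # s) (c # t)"
proof -
  have "{k. k < length (c # s) \<and> (c # s) ! k \<noteq> (c # t) ! k} = Suc ` {k. k < length s \<and> s ! k \<noteq> t ! k}"
  proof
    show "{k. k < length (c # s) \<and> (c # s) ! k \<noteq> (c # t) ! k} \<subseteq> Suc ` {k. k < length s \<and> s ! k \<noteq> t ! k}"
    proof
      fix k assume "k \<in> {k. k < length (c # s) \<and> (c # s) ! k \<noteq> (c # t) ! k}"
      thus "k \<in> Suc ` {k. k < length s \<and> s ! k \<noteq> t ! k}" by (cases k) auto
    qed
  qed auto
  moreover have "card (Suc ` {k. k < length s \<and> s ! k \<noteq> t ! k}) = card {k. k < length s \<and> s ! k \<noteq> t ! k}"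
    by (rule card_image) simp
  ultimately have c1: "card {k. k < length (c # s) \<and> (c # s) ! k \<noteq> (c # t) ! k} = card {k. k < length s \<and> s ! k \<noteq> t ! k}"
    by simp
  have len: "length s = length t" using assms by (simp add: hyp_adj_def)
  have c2: "card {k. k < length s \<and> s ! k \<noteq> t ! k} = 1" using assms unfolding hyp_adj_def by (rule conjunct2)
  show ?thesis unfolding hyp_adj_def using c1 c2 len by simp
qed

lemma hyp_adj_pre: "hyp_adj s t \<Longrightarrow> hyp_adj (P @ s) (P @ t)"
  by (induction P) (simp_all add: hyp_adj_Cons)

lemma hyp_adj_app: assumes "hyp_adj s t" shows "hyp_adj (s @ Q) (t @ Q)"
proof -
  have len: "length s = length t" using assms by (simp add: hyp_adj_def)
  have "{k. k < length (s @ Q) \<and> (s @ Q) ! k \<noteq> (t @ Q) ! k} = {k. k < length s \<and> s ! k \<noteq> t ! k}"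
    using len by (auto simp: nth_append split: if_splits)
  thus ?thesis using assms len unfolding hyp_adj_def by simp
qed

lemma hyp_adj_FT: "hyp_adj [False] [True]"
proof -
  have "{k. k < length [False] \<and> [False] ! k \<noteq> [True] ! k} = {0}" by auto
  thus ?thesis by (simp add: hyp_adj_def)
qed

lemma rot_adj:
  assumes u: "u \<in> Dyck" shows "hyp_adj (False # rot u) (u @ [True])"
proof (cases "u = []")
  case True thus ?thesis using hyp_adj_FT by simp
next
  case False
  then obtain a b where ab: "a \<in> Dyck" "b \<in> Dyck" "u = False # a @ True # b"
    using Dyck_decomp[OF u] by blast
  have "hyp_adj ((False # a) @ ([False] @ (b @ [True]))) ((False # a) @ ([True] @ (b @ [True])))"
    by (intro hyp_adj_pre hyp_adj_app hyp_adj_FT)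
  thus ?thesis using rot_eq[OF ab(1,2)] ab(3) by simp
qed

lemma joinr_split_aux:
  "\<forall>us h. Suc (Suc k) < h \<longrightarrow> length us = Suc h \<longrightarrow> us ! Suc (Suc k) = [] \<longrightarrow>
    (\<exists>A W. joinr (Suc (Suc k)) us = A @ True # us ! Suc k @ True # False # W \<and>
      joinr (Suc k) (us[Suc k := [], Suc (Suc k) := rot (us ! Suc k)]) = A @ True # False # rot (us ! Suc k) @ False # W)"
proof (induction k)
  case 0
  show ?case
  proof (intro allI impI)
    fix us :: "bool list list" and h :: nat
    assume a: "Suc (Suc 0) < h" "length us = Suc h" "us ! Suc (Suc 0) = []"
    obtain u0 u1 u2 w rest where us: "us = u0 # u1 # u2 # w # rest" using a(1,2)
      by (cases us; cases "tl us"; cases "tl (tl us)"; cases "tl (tl (tl us))") auto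
    have u2: "u2 = []" using a(3) us by simp
    show "\<exists>A W. joinr (Suc (Suc 0)) us = A @ True # us ! Suc 0 @ True # False # W \<and>
      joinr (Suc 0) (us[Suc 0 := [], Suc (Suc 0) := rot (us ! Suc 0)]) = A @ True # False # rot (us ! Suc 0) @ False # W"
      using us u2 by (intro exI[of _ u0] exI[of _ "joinr 0 (w # rest)"]) simp
  qed
next
  case (Suc k)
  show ?case
  proof (intro allI impI)
    fix us :: "bool list list" and h :: nat
    assume a: "Suc (Suc (Suc k)) < h" "length us = Suc h" "us ! Suc (Suc (Suc k)) = []"
    obtain u0 v vs where us: "us = u0 # v # vs" using a(1,2)
      by (cases us; cases "tl us") auto
    have IH: "\<exists>A W. joinr (Suc (Suc k)) (v # vs) = A @ True # (v # vs) ! Suc k @ True # False # W \<and>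
      joinr (Suc k) ((v # vs)[Suc k := [], Suc (Suc k) := rot ((v # vs) ! Suc k)]) =
        A @ True # False # rot ((v # vs) ! Suc k) @ False # W"
      using Suc.IH[rule_format, of "h - 1" "v # vs"] a us by simp
    then obtain A W where AW: "joinr (Suc (Suc k)) (v # vs) = A @ True # (v # vs) ! Suc k @ True # False # W"
      "joinr (Suc k) ((v # vs)[Suc k := [], Suc (Suc k) := rot ((v # vs) ! Suc k)]) =
        A @ True # False # rot ((v # vs) ! Suc k) @ False # W" by blast
    obtain v' vs' where vv: "(v # vs)[Suc k := [], Suc (Suc k) := rot ((v # vs) ! Suc k)] = v' # vs'"
      by (cases "(v # vs)[Suc k := [], Suc (Suc k) := rot ((v # vs) ! Suc k)]") auto
    have e1: "joinr (Suc (Suc (Suc k))) us = u0 @ True # joinr (Suc (Suc k)) (v # vs)" using us by simp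
    have e2: "us[Suc (Suc k) := [], Suc (Suc (Suc k)) := rot (us ! Suc (Suc k))]
        = u0 # (v # vs)[Suc k := [], Suc (Suc k) := rot ((v # vs) ! Suc k)]" using us by simp
    have e3: "joinr (Suc (Suc k)) (u0 # v' # vs') = u0 @ True # joinr (Suc k) (v' # vs')" by simp
    show "\<exists>A W. joinr (Suc (Suc (Suc k))) us = A @ True # us ! Suc (Suc k) @ True # False # W \<and>
      joinr (Suc (Suc k)) (us[Suc (Suc k) := [], Suc (Suc (Suc k)) := rot (us ! Suc (Suc k))]) =
        A @ True # False # rot (us ! Suc (Suc k)) @ False # W"
      using AW e1 e2 e3 vv us by (intro exI[of _ "u0 @ True # A"] exI[of _ W]) simp
  qed
qed

lemma joinr_split:
  assumes "1 < i" "i < h" "length us = Suc h" "us ! i = []"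
  shows "\<exists>A W. joinr i us = A @ True # us ! (i - 1) @ True # False # W \<and>
      joinr (i - 1) (us[i - 1 := [], i := rot (us ! (i - 1))]) = A @ True # False # rot (us ! (i - 1)) @ False # W"
proof -
  define k where "k = i - 2"
  have k: "i = Suc (Suc k)" using assms(1) by (simp add: k_def)
  show ?thesis using joinr_split_aux[of k] assms k by simp
qed



definition phi :: "nat \<Rightarrow> bool list list \<Rightarrow> bool list list" where
  "phi i us = us[i - 1 := [], i := rot (us ! (i - 1))]"

lemma zmap_eq:
  assumes "length us = Suc h" "set us \<subseteq> Dyck" "us ! i = []"
  shows "zmap h i (joinr i us) = joinr (i - 1) (phi i us)"
  unfolding zmap_def
proof (rule the_equality)
  show "\<exists>us'. length us' = Suc h \<and> set us' \<subseteq> Dyck \<and> joinr i us = join i us' \<and> us' ! i = [] \<and>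
      joinr (i - 1) (phi i us) = join (i - 1) (us'[i - 1 := [], i := rot (us' ! (i - 1))])"
    using assms by (intro exI[of _ us]) (simp add: join_joinr phi_def)
next
  fix y assume "\<exists>us'. length us' = Suc h \<and> set us' \<subseteq> Dyck \<and> joinr i us = join i us' \<and> us' ! i = [] \<and>
      y = join (i - 1) (us'[i - 1 := [], i := rot (us' ! (i - 1))])"
  then obtain us' where u: "length us' = Suc h" "set us' \<subseteq> Dyck" "joinr i us = joinr i us'"
      "y = joinr (i - 1) (phi i us')" by (auto simp: join_joinr phi_def)
  have "us' = us" using joinr_inj[OF u(2) assms(2) _ u(3)[symmetric]] u(1) assms(1) by simp
  thus "y = joinr (i - 1) (phi i us)" using u(4) by simp
qed

lemma fun_pm:
  assumes disj: "X \<inter> Y = {}" and fX: "\<And>y. y \<in> Y \<Longrightarrow> f y \<in> X"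
    and adj: "\<And>y. y \<in> Y \<Longrightarrow> hyp_adj (f y) y"
    and inj: "inj_on f Y" and srj: "\<And>x. x \<in> X \<Longrightarrow> \<exists>y\<in>Y. f y = x"
  shows "perfect_matching_between (edges_between {{y, f y} | y. y \<in> Y} X Y) X Y"
proof -
  let ?E = "edges_between {{y, f y} | y. y \<in> Y} X Y"
  have Echar: "e \<in> ?E \<longleftrightarrow> (\<exists>y\<in>Y. e = {y, f y})" for e
  proof
    assume "e \<in> ?E" thus "\<exists>y\<in>Y. e = {y, f y}" unfolding edges_between_def by blast
  next
    assume "\<exists>y\<in>Y. e = {y, f y}"
    then obtain y where y: "y \<in> Y" "e = {y, f y}" by blast
    have "e = {f y, y}" using y(2) by (simp add: insert_commute)
    thus "e \<in> ?E" unfolding edges_between_def using y fX[OF y(1)] by blast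
  qed
  show ?thesis unfolding perfect_matching_between_def
  proof (intro conjI ballI)
    show "X \<inter> Y = {}" by fact
  next
    fix e assume "e \<in> ?E"
    then obtain y where y: "y \<in> Y" "e = {y, f y}" using Echar by blast
    have "e = {f y, y}" using y(2) by (simp add: insert_commute)
    thus "\<exists>x\<in>X. \<exists>y\<in>Y. e = {x, y} \<and> hyp_adj x y" using y(1) fX adj by blast
  next
    fix v assume "v \<in> X \<union> Y"
    thus "\<exists>!e. e \<in> ?E \<and> v \<in> e"
    proof
      assume v: "v \<in> X"
      obtain y0 where y0: "y0 \<in> Y" "f y0 = v" using srj[OF v] by blast
      show ?thesis
      proof (rule ex1I[of _ "{y0, f y0}"])
        show "{y0, f y0} \<in> ?E \<and> v \<in> {y0, f y0}" using Echar y0 by blast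
      next
        fix e assume "e \<in> ?E \<and> v \<in> e"
        then obtain y where y: "y \<in> Y" "e = {y, f y}" "v \<in> e" using Echar by blast
        have "v \<noteq> y" using v y(1) disj by blast
        hence "v = f y" using y by auto
        hence "y = y0" using inj y0 y(1) by (metis inj_on_def)
        thus "e = {y0, f y0}" using y by simp
      qed
    next
      assume v: "v \<in> Y"
      show ?thesis
      proof (rule ex1I[of _ "{v, f v}"])
        show "{v, f v} \<in> ?E \<and> v \<in> {v, f v}" using Echar v by blast
      next
        fix e assume "e \<in> ?E \<and> v \<in> e"
        then obtain y where y: "y \<in> Y" "e = {y, f y}" "v \<in> e" using Echar by blast
        have "v \<noteq> f y" using fX[OF y(1)] v disj by blast
        hence "v = y" using y by auto
        thus "e = {v, f v}" using y by simp
      qed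
    qed
  qed
qed

lemma phi_nth: "i < length us \<Longrightarrow> 0 < i \<Longrightarrow> phi i us ! k =
   (if k = i then rot (us ! (i - 1)) else if k = i - 1 then [] else us ! k)"
  by (simp add: phi_def nth_list_update)

lemma phi_len[simp]: "length (phi i us) = length us" by (simp add: phi_def)

lemma phi_Dyck: "set us \<subseteq> Dyck \<Longrightarrow> i < length us \<Longrightarrow> 0 < i \<Longrightarrow> set (phi i us) \<subseteq> Dyck"
proof -
  assume a: "set us \<subseteq> Dyck" "i < length us" "0 < i"
  have "us ! (i - 1) \<in> Dyck" using a by (simp add: subset_code(1))
  hence r: "rot (us ! (i - 1)) \<in> Dyck" using rot_props by blast
  show ?thesis unfolding phi_def using a r set_update_subset_insert
    by (metis Dyck_Nil insert_subset order_trans)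
qed

lemma case_iii:
  assumes i1: "1 < i" and ih: "i < h"
  shows "perfect_matching_between (edges_between (Z02 n h i) (Cminus n h (i - 1)) (Cminus n h i))
     (Cminus n h (i - 1)) (Cminus n h i)"
  unfolding Z02_def
proof (rule fun_pm)
  have mem: "y \<in> Cminus n h i \<longleftrightarrow> length y = n \<and> (\<exists>us. length us = Suc h \<and> set us \<subseteq> Dyck \<and> y = joinr i us \<and> us ! i = [])" for y
    using ih by (auto simp: Cminus_def join_joinr)
  have mem': "x \<in> Cminus n h (i - 1) \<longleftrightarrow> length x = n \<and> (\<exists>us. length us = Suc h \<and> set us \<subseteq> Dyck \<and> x = joinr (i - 1) us \<and> us ! (i - 1) = [])" for x
    using ih by (auto simp: Cminus_def join_joinr)
  have key: "zmap h i y \<in> Cminus n h (i - 1) \<and> hyp_adj (zmap h i y) y" if y: "y \<in> Cminus n h i" for y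
  proof -
    obtain us where us: "length y = n" "length us = Suc h" "set us \<subseteq> Dyck" "y = joinr i us" "us ! i = []"
      using y mem by blast
    have z: "zmap h i y = joinr (i - 1) (phi i us)" using zmap_eq[OF us(2,3,5)] us(4) by simp
    obtain A W where AW: "joinr i us = A @ True # us ! (i - 1) @ True # False # W"
      "joinr (i - 1) (phi i us) = A @ True # False # rot (us ! (i - 1)) @ False # W"
      using joinr_split[OF i1 ih us(2,5)] unfolding phi_def by blast
    have ud: "us ! (i - 1) \<in> Dyck" using us(2,3) ih by (simp add: subset_code(1))
    have lr: "length (rot (us ! (i - 1))) = length (us ! (i - 1))" using rot_props[OF ud] by simp
    have l: "length (zmap h i y) = n" using z AW us(1,4) lr by simp
    have ii: "i - 1 \<noteq> i" using i1 by simp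
    have p1: "(phi i us) ! (i - 1) = []" using i1 ih us(2) ii by (simp add: phi_nth)
    have p2: "set (phi i us) \<subseteq> Dyck" using phi_Dyck[OF us(3)] ih us(2) i1 by simp
    have "length (zmap h i y) = n \<and> (\<exists>us'. length us' = Suc h \<and> set us' \<subseteq> Dyck \<and> zmap h i y = joinr (i - 1) us' \<and> us' ! (i - 1) = [])"
      using l p1 p2 us(2) z by (intro conjI exI[of _ "phi i us"]) simp_all
    hence zX: "zmap h i y \<in> Cminus n h (i - 1)" by (simp only: mem')
    have "hyp_adj ((A @ [True]) @ (False # rot (us ! (i - 1))) @ (False # W)) ((A @ [True]) @ (us ! (i - 1) @ [True]) @ (False # W))"
      by (intro hyp_adj_pre hyp_adj_app rot_adj ud)
    hence "hyp_adj (zmap h i y) y" using z AW us(4) by simp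
    thus ?thesis using zX by simp
  qed
  show "Cminus n h (i - 1) \<inter> Cminus n h i = {}"
  proof -
    have "x \<notin> Cminus n h i" if "x \<in> Cminus n h (i - 1)" for x
      using that i1 by (auto simp: Cminus_iff C_iff)
    thus ?thesis by blast
  qed
  show "\<And>y. y \<in> Cminus n h i \<Longrightarrow> zmap h i y \<in> Cminus n h (i - 1)" using key by blast
  show "\<And>y. y \<in> Cminus n h i \<Longrightarrow> hyp_adj (zmap h i y) y" using key by blast
  show "inj_on (zmap h i) (Cminus n h i)"
  proof (rule inj_onI)
    fix y1 y2 assume y1: "y1 \<in> Cminus n h i" and y2: "y2 \<in> Cminus n h i" and eq: "zmap h i y1 = zmap h i y2"
    obtain us1 where us1: "length us1 = Suc h" "set us1 \<subseteq> Dyck" "y1 = joinr i us1" "us1 ! i = []"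
      using y1 mem by blast
    obtain us2 where us2: "length us2 = Suc h" "set us2 \<subseteq> Dyck" "y2 = joinr i us2" "us2 ! i = []"
      using y2 mem by blast
    have "joinr (i - 1) (phi i us1) = joinr (i - 1) (phi i us2)"
      using eq zmap_eq[OF us1(1,2,4)] zmap_eq[OF us2(1,2,4)] us1(3) us2(3) by simp
    hence pe: "phi i us1 = phi i us2"
      using joinr_inj[OF phi_Dyck[OF us1(2)] phi_Dyck[OF us2(2)]] us1(1) us2(1) ih i1 by simp
    have "rot (us1 ! (i - 1)) = rot (us2 ! (i - 1))"
      using arg_cong[OF pe, of "\<lambda>l. l ! i"] us1(1) us2(1) ih i1 by (simp add: phi_nth)
    hence e1: "us1 ! (i - 1) = us2 ! (i - 1)"
      using rot_inj us1(1,2) us2(1,2) ih by (simp add: subset_code(1))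
    have "us1 = us2"
    proof (rule nth_equalityI)
      show "length us1 = length us2" using us1(1) us2(1) by simp
      fix k assume k: "k < length us1"
      show "us1 ! k = us2 ! k"
      proof (cases "k = i \<or> k = i - 1")
        case True thus ?thesis using e1 us1(4) us2(4) by auto
      next
        case False
        thus ?thesis using arg_cong[OF pe, of "\<lambda>l. l ! k"] us1(1) us2(1) ih i1 by (simp add: phi_nth)
      qed
    qed
    thus "y1 = y2" using us1(3) us2(3) by simp
  qed
  show "\<And>x. x \<in> Cminus n h (i - 1) \<Longrightarrow> \<exists>y\<in>Cminus n h i. zmap h i y = x"
  proof -
    fix x assume x: "x \<in> Cminus n h (i - 1)"
    obtain ws where ws: "length x = n" "length ws = Suc h" "set ws \<subseteq> Dyck" "x = joinr (i - 1) ws" "ws ! (i - 1) = []"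
      using x mem' by blast
    have wi: "ws ! i \<in> Dyck" using ws(2,3) ih by (simp add: subset_code(1))
    obtain u where u: "u \<in> Dyck" "rot u = ws ! i" using rot_surj[OF wi] by blast
    define us where "us = ws[i - 1 := u, i := []]"
    have usl: "length us = Suc h" using ws(2) by (simp add: us_def)
    have usi: "us ! i = []" using ws(2) ih by (simp add: us_def)
    have usi1: "us ! (i - 1) = u" using ws(2) ih i1 by (simp add: us_def nth_list_update)
    have usD: "set us \<subseteq> Dyck" unfolding us_def using ws(3) u(1) set_update_subset_insert
      by (metis Dyck_Nil insert_subset order_trans)
    have pw: "phi i us = ws"
    proof (rule nth_equalityI)
      show "length (phi i us) = length ws" using usl ws(2) by simp
      fix k assume "k < length (phi i us)"
      thus "phi i us ! k = ws ! k" using usl ws(2,5) ih i1 u(2) usi1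
        by (simp add: phi_nth us_def nth_list_update)
    qed
    define y where "y = joinr i us"
    have zy: "zmap h i y = x" using zmap_eq[OF usl usD usi] pw ws(4) by (simp add: y_def)
    obtain A W where AW: "joinr i us = A @ True # us ! (i - 1) @ True # False # W"
      "joinr (i - 1) (phi i us) = A @ True # False # rot (us ! (i - 1)) @ False # W"
      using joinr_split[OF i1 ih usl usi] unfolding phi_def by blast
    have "length y = n" using AW ws(1,4) pw rot_props[OF u(1)] usi1 by (simp add: y_def)
    hence "y \<in> Cminus n h i" using mem usl usD usi by (auto simp: y_def)
    thus "\<exists>y\<in>Cminus n h i. zmap h i y = x" using zy by blast
  qed
qed


theorem lemma5:
  fixes n :: nat
  assumes "n \<ge> 3"
  shows "(\<forall>h i. i < h \<and> h \<le> n \<longrightarrow>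
            perfect_matching_between (edges_between (Mlex n 0) (C n h i) (C n h (i + 1)))
              (C n h i) (C n h (i + 1)))
       \<and> perfect_matching_between (edges_between (Mlex n 1) (Cminus n 1 0) (Cminus n 1 1))
              (Cminus n 1 0) (Cminus n 1 1)
       \<and> (\<forall>h i. i \<le> h \<and> h \<le> n - 2 \<longrightarrow>
            perfect_matching_between (edges_between (Mlex n 1) (Cplus n h i) (Cminus n (h + 2) (i + 2)))
              (Cplus n h i) (Cminus n (h + 2) (i + 2))
          \<and> perfect_matching_between (edges_between (Mlex n 1) (Cplus n h i) (Cminus n (h + 2) i))
              (Cplus n h i) (Cminus n (h + 2) i))
       \<and> (\<forall>h i. 1 < i \<and> i < h \<and> h \<le> n \<longrightarrow>
            perfect_matching_between (edges_between (Z02 n h i) (Cminus n h (i - 1)) (Cminus n h i))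
              (Cminus n h (i - 1)) (Cminus n h i))"
proof -
  have c1: "\<forall>h i. i < h \<and> h \<le> n \<longrightarrow>
            perfect_matching_between (edges_between (Mlex n 0) (C n h i) (C n h (i + 1)))
              (C n h i) (C n h (i + 1))"
  proof (intro allI impI)
    fix h i :: nat assume "i < h \<and> h \<le> n"
    thus "perfect_matching_between (edges_between (Mlex n 0) (C n h i) (C n h (i + 1)))
              (C n h i) (C n h (i + 1))" by (intro case_i) simp
  qed
  have c2: "perfect_matching_between (edges_between (Mlex n 1) (Cminus n 1 0) (Cminus n 1 1))
              (Cminus n 1 0) (Cminus n 1 1)" using case_ii0[OF assms] .
  have c3: "\<forall>h i. i \<le> h \<and> h \<le> n - 2 \<longrightarrow>
            perfect_matching_between (edges_between (Mlex n 1) (Cplus n h i) (Cminus n (h + 2) (i + 2)))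
              (Cplus n h i) (Cminus n (h + 2) (i + 2))
          \<and> perfect_matching_between (edges_between (Mlex n 1) (Cplus n h i) (Cminus n (h + 2) i))
              (Cplus n h i) (Cminus n (h + 2) i)"
  proof (intro allI impI conjI)
    fix h i :: nat assume a: "i \<le> h \<and> h \<le> n - 2"
    show "perfect_matching_between (edges_between (Mlex n 1) (Cplus n h i) (Cminus n (h + 2) (i + 2)))
              (Cplus n h i) (Cminus n (h + 2) (i + 2))" using a by (intro case_iia) simp
    show "perfect_matching_between (edges_between (Mlex n 1) (Cplus n h i) (Cminus n (h + 2) i))
              (Cplus n h i) (Cminus n (h + 2) i)"
      using pm_swap[OF case_iib[of i h n]] a by simp
  qed
  have c4: "\<forall>h i. 1 < i \<and> i < h \<and> h \<le> n \<longrightarrow>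
            perfect_matching_between (edges_between (Z02 n h i) (Cminus n h (i - 1)) (Cminus n h i))
              (Cminus n h (i - 1)) (Cminus n h i)"
  proof (intro allI impI)
    fix h i :: nat assume "1 < i \<and> i < h \<and> h \<le> n"
    thus "perfect_matching_between (edges_between (Z02 n h i) (Cminus n h (i - 1)) (Cminus n h i))
              (Cminus n h (i - 1)) (Cminus n h i)" by (intro case_iii) simp_all
  qed
  show ?thesis using c1 c2 c3 c4 by blast
qed

end
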